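(* Let $R$ be a ring with a complete, separated Zariskian filtration $w:R\to\mathbb{Z}\cup\{\infty\}$, let $(\sigma,\delta)$ be a skew derivation on $R$ compatible with $w$, and let $S=R^b[[x;\sigma,\delta]]$. Let $I$ be a closed ideal of $R$ with $\sigma(I)\subseteq I$ and $\delta(I)\subseteq I$, and let $(\overline\sigma,\overline\delta)$ be the induced skew derivation of $R/I$. Then $(\overline\sigma,\overline\delta)$ is compatible with the quotient filtration $\overline w(r+I)=\sup\{w(r+y):y\in I\}$. Moreover the closure $\overline{IS}$ of $IS$ in $S$ (with respect to $f_w$) is a two-sided ideal of $S$, and $S/\overline{IS}\cong(R/I)^b[[x;\overline\sigma,\overline\delta]]$.
   Context: Filtrations $u$ satisfy $u(0)=\infty$, $u(x+y)\ge\min$, $u(xy)\ge u(x)+u(y)$, are separated and descending with level sets $F_nR=\{u\ge n\}$; Zariskian means the Rees ring $\bigoplus_nF_nR\,t^{-n}$ is Noetherian and $F_1R\subseteq J(F_0R)$ ($R/I$ is complete with respect to $\overline w$). A skew derivation is $(\sigma,\delta)$ with $\sigma$ an automorphism and $\delta(ab)=\delta(a)b+\sigma(a)\delta(b)$; it is compatible with $u$ if $\deg_u(\sigma-\mathrm{id})>0$ and $\deg_u(\delta)>0$, where $\deg_u(d)=\inf_{x\ne0}\{u(d(x))-u(x)\}$. For complete $(R,u)$ and compatible $(\sigma,\delta)$, $R^b[[x;\sigma,\delta]]$ is the ring of series $\sum_{n\ge0}r_nx^n$ with $u(r_n)+\tfrac12n\to\infty$, with multiplication extending $xa=\sigma(a)x+\delta(a)$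 continuously and $R$-linearly, filtered by $f_u(\sum r_ix^i)=\inf_i\{u(r_i)+\tfrac12i\}$. *)

theory Defs
  imports "HOL-Library.Extended_Real" "HOL-Algebra.Algebra"
begin

text \<open>A (descending, integer valued) filtration w on a ring R, written as a valuation-like
  function with values in Z \<union> {\<infinity>}, embedded in ereal.\<close>
definition filtration :: "('a,'m) ring_scheme \<Rightarrow> ('a \<Rightarrow> ereal) \<Rightarrow> bool" where
  "filtration R w \<longleftrightarrow>
     (\<forall>x\<in>carrier R. w x = \<infinity> \<or> (\<exists>n::int. w x = ereal (real_of_int n))) \<and>
     w \<zero>\<^bsub>R\<^esub> = \<infinity> \<and>
     (\<forall>x\<in>carrier R. \<forall>y\<in>carrier R. w (x \<oplus>\<^bsub>R\<^esub> y) \<ge> min (w x) (w y)) \<and>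
     (\<forall>x\<in>carrier R. \<forall>y\<in>carrier R. w (x \<otimes>\<^bsub>R\<^esub> y) \<ge> w x + w y) \<and>
     (\<forall>x\<in>carrier R. w (\<ominus>\<^bsub>R\<^esub> x) = w x) \<and>
     w \<one>\<^bsub>R\<^esub> \<ge> 0"

definition separated :: "('a,'m) ring_scheme \<Rightarrow> ('a \<Rightarrow> ereal) \<Rightarrow> bool" where
  "separated R w \<longleftrightarrow> (\<forall>x\<in>carrier R. w x = \<infinity> \<longrightarrow> x = \<zero>\<^bsub>R\<^esub>)"

definition fconv :: "('a,'m) ring_scheme \<Rightarrow> ('a \<Rightarrow> ereal) \<Rightarrow> (nat \<Rightarrow> 'a) \<Rightarrow> 'a \<Rightarrow> bool" where
  "fconv R w a L \<longleftrightarrow> L \<in> carrier R \<and>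
     (\<forall>N::real. \<exists>M. \<forall>n\<ge>M. w (a n \<ominus>\<^bsub>R\<^esub> L) \<ge> ereal N)"

definition fcauchy :: "('a,'m) ring_scheme \<Rightarrow> ('a \<Rightarrow> ereal) \<Rightarrow> (nat \<Rightarrow> 'a) \<Rightarrow> bool" where
  "fcauchy R w a \<longleftrightarrow>
     (\<forall>N::real. \<exists>M. \<forall>m\<ge>M. \<forall>n\<ge>M. w (a m \<ominus>\<^bsub>R\<^esub> a n) \<ge> ereal N)"

definition fcomplete :: "('a,'m) ring_scheme \<Rightarrow> ('a \<Rightarrow> ereal) \<Rightarrow> bool" where
  "fcomplete R w \<longleftrightarrow> (\<forall>a. (\<forall>n. a n \<in> carrier R) \<longrightarrow> fcauchy R w a \<longrightarrow> (\<exists>L. fconv R w a L))"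

definition fclosed :: "('a,'m) ring_scheme \<Rightarrow> ('a \<Rightarrow> ereal) \<Rightarrow> 'a set \<Rightarrow> bool" where
  "fclosed R w A \<longleftrightarrow> (\<forall>a L. (\<forall>n. a n \<in> A) \<longrightarrow> fconv R w a L \<longrightarrow> L \<in> A)"

definition fsum :: "('a,'m) ring_scheme \<Rightarrow> ('a \<Rightarrow> ereal) \<Rightarrow> (nat \<Rightarrow> 'a) \<Rightarrow> 'a" where
  "fsum R w a = (THE L. fconv R w (\<lambda>m. finsum R a {..<m}) L)"

definition left_ideal :: "('a,'m) ring_scheme \<Rightarrow> 'a set \<Rightarrow> bool" where
  "left_ideal A L \<longleftrightarrow> additive_subgroup L A \<and>
     (\<forall>a\<in>carrier A. \<forall>x\<in>L. a \<otimes>\<^bsub>A\<^esub> x \<in> L)"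

definition right_ideal :: "('a,'m) ring_scheme \<Rightarrow> 'a set \<Rightarrow> bool" where
  "right_ideal A L \<longleftrightarrow> additive_subgroup L A \<and>
     (\<forall>a\<in>carrier A. \<forall>x\<in>L. x \<otimes>\<^bsub>A\<^esub> a \<in> L)"

definition noetherian :: "('a,'m) ring_scheme \<Rightarrow> bool" where
  "noetherian A \<longleftrightarrow> ring A \<and>
     (\<forall>L::nat \<Rightarrow> 'a set. (\<forall>n. left_ideal A (L n)) \<longrightarrow> (\<forall>n. L n \<subseteq> L (Suc n)) \<longrightarrow>
        (\<exists>N. \<forall>n\<ge>N. L n = L N)) \<and>
     (\<forall>L::nat \<Rightarrow> 'a set. (\<forall>n. right_ideal A (L n)) \<longrightarrow> (\<forall>n. L n \<subseteq> L (Suc n)) \<longrightarrow>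
        (\<exists>N. \<forall>n\<ge>N. L n = L N))"

definition maximal_left_ideal :: "('a,'m) ring_scheme \<Rightarrow> 'a set \<Rightarrow> bool" where
  "maximal_left_ideal A L \<longleftrightarrow> left_ideal A L \<and> L \<noteq> carrier A \<and>
     (\<forall>L'. left_ideal A L' \<longrightarrow> L \<subseteq> L' \<longrightarrow> L' = L \<or> L' = carrier A)"

definition jacobson :: "('a,'m) ring_scheme \<Rightarrow> 'a set" where
  "jacobson A = carrier A \<inter> \<Inter> {L. maximal_left_ideal A L}"

definition level :: "('a,'m) ring_scheme \<Rightarrow> ('a \<Rightarrow> ereal) \<Rightarrow> int \<Rightarrow> 'a set" where
  "level R w n = {x \<in> carrier R. w x \<ge> ereal (real_of_int n)}"

definition level0_ring :: "('a,'m) ring_scheme \<Rightarrow> ('a \<Rightarrow> ereal) \<Rightarrow> 'a ring" where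
  "level0_ring R w = \<lparr>carrier = level R w 0, monoid.mult = monoid.mult R, monoid.one = monoid.one R,
                      ring.zero = ring.zero R, ring.add = ring.add R\<rparr>"

text \<open>The Rees ring \<Oplus>_n F_n R t^(-n): finitely supported families f with f n \<in> F_n R.\<close>
definition rees_ring :: "('a,'m) ring_scheme \<Rightarrow> ('a \<Rightarrow> ereal) \<Rightarrow> (int \<Rightarrow> 'a) ring" where
  "rees_ring R w = \<lparr>carrier = {f. (\<forall>n. f n \<in> level R w n) \<and> finite {n. f n \<noteq> \<zero>\<^bsub>R\<^esub>}},
     monoid.mult = (\<lambda>f g n. finsum R (\<lambda>a. f a \<otimes>\<^bsub>R\<^esub> g (n - a)) {a. f a \<noteq> \<zero>\<^bsub>R\<^esub>}),
     monoid.one = (\<lambda>n. if n = 0 then \<one>\<^bsub>R\<^esub> else \<zero>\<^bsub>R\<^esub>),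
     ring.zero = (\<lambda>n. \<zero>\<^bsub>R\<^esub>),
     ring.add = (\<lambda>f g n. f n \<oplus>\<^bsub>R\<^esub> g n)\<rparr>"

definition zariskian :: "('a,'m) ring_scheme \<Rightarrow> ('a \<Rightarrow> ereal) \<Rightarrow> bool" where
  "zariskian R w \<longleftrightarrow> noetherian (rees_ring R w) \<and>
     level R w 1 \<subseteq> jacobson (level0_ring R w)"

definition skew_derivation :: "('a,'m) ring_scheme \<Rightarrow> ('a \<Rightarrow> 'a) \<Rightarrow> ('a \<Rightarrow> 'a) \<Rightarrow> bool" where
  "skew_derivation R \<sigma> \<delta> \<longleftrightarrow> \<sigma> \<in> ring_iso R R \<and> \<delta> \<in> carrier R \<rightarrow> carrier R \<and>
     (\<forall>a\<in>carrier R. \<forall>b\<in>carrier R. \<delta> (a \<oplus>\<^bsub>R\<^esub> b) = \<delta> a \<oplus>\<^bsub>R\<^esub> \<delta> b) \<and>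
     (\<forall>a\<in>carrier R. \<forall>b\<in>carrier R.
        \<delta> (a \<otimes>\<^bsub>R\<^esub> b) = \<delta> a \<otimes>\<^bsub>R\<^esub> b \<oplus>\<^bsub>R\<^esub> \<sigma> a \<otimes>\<^bsub>R\<^esub> \<delta> b)"

definition fdeg :: "('a,'m) ring_scheme \<Rightarrow> ('a \<Rightarrow> ereal) \<Rightarrow> ('a \<Rightarrow> 'a) \<Rightarrow> ereal" where
  "fdeg R w d = (INF x\<in>carrier R - {\<zero>\<^bsub>R\<^esub>}. w (d x) - w x)"

definition compatible :: "('a,'m) ring_scheme \<Rightarrow> ('a \<Rightarrow> ereal) \<Rightarrow> ('a \<Rightarrow> 'a) \<Rightarrow> ('a \<Rightarrow> 'a) \<Rightarrow> bool" where
  "compatible R w \<sigma> \<delta> \<longleftrightarrow> fdeg R w (\<lambda>x. \<sigma> x \<ominus>\<^bsub>R\<^esub> x) > 0 \<and> fdeg R w \<delta> > 0"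

text \<open>skw_coef i k a is the coefficient of x^k in x^i a = \<Sum>_k skw_coef i k a x^k,
  determined by x a = \<sigma>(a) x + \<delta>(a).\<close>
primrec skw_coef :: "('a,'m) ring_scheme \<Rightarrow> ('a \<Rightarrow> 'a) \<Rightarrow> ('a \<Rightarrow> 'a) \<Rightarrow> nat \<Rightarrow> nat \<Rightarrow> 'a \<Rightarrow> 'a" where
  "skw_coef R \<sigma> \<delta> 0 k a = (if k = 0 then a else \<zero>\<^bsub>R\<^esub>)"
| "skw_coef R \<sigma> \<delta> (Suc i) k a =
     (if k = 0 then \<zero>\<^bsub>R\<^esub> else \<sigma> (skw_coef R \<sigma> \<delta> i (k - 1) a))
     \<oplus>\<^bsub>R\<^esub> \<delta> (skw_coef R \<sigma> \<delta> i k a)"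

definition bseries :: "('a,'m) ring_scheme \<Rightarrow> ('a \<Rightarrow> ereal) \<Rightarrow> (nat \<Rightarrow> 'a) set" where
  "bseries R w = {r. (\<forall>n. r n \<in> carrier R) \<and>
       ((\<lambda>n. w (r n) + ereal (real n / 2)) \<longlongrightarrow> \<infinity>) sequentially}"

definition skew_ps :: "('a,'m) ring_scheme \<Rightarrow> ('a \<Rightarrow> ereal) \<Rightarrow> ('a \<Rightarrow> 'a) \<Rightarrow> ('a \<Rightarrow> 'a)
     \<Rightarrow> (nat \<Rightarrow> 'a) ring" where
  "skew_ps R w \<sigma> \<delta> = \<lparr>carrier = bseries R w,
     monoid.mult = (\<lambda>r s n. finsum R (\<lambda>j. fsum R w (\<lambda>i. r i \<otimes>\<^bsub>R\<^esub> skw_coef R \<sigma> \<delta> i (n - j) (s j))) {..n}),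
     monoid.one = (\<lambda>n. if n = 0 then \<one>\<^bsub>R\<^esub> else \<zero>\<^bsub>R\<^esub>),
     ring.zero = (\<lambda>n. \<zero>\<^bsub>R\<^esub>),
     ring.add = (\<lambda>r s n. r n \<oplus>\<^bsub>R\<^esub> s n)\<rparr>"

definition ps_filt :: "('a \<Rightarrow> ereal) \<Rightarrow> (nat \<Rightarrow> 'a) \<Rightarrow> ereal" where
  "ps_filt w r = (INF i. w (r i) + ereal (real i / 2))"

definition const_ps :: "('a,'m) ring_scheme \<Rightarrow> 'a \<Rightarrow> nat \<Rightarrow> 'a" where
  "const_ps R a = (\<lambda>n. if n = 0 then a else \<zero>\<^bsub>R\<^esub>)"

definition ideal_times_S :: "('a,'m) ring_scheme \<Rightarrow> ('a \<Rightarrow> ereal) \<Rightarrow> ('a \<Rightarrow> 'a) \<Rightarrow> ('a \<Rightarrow> 'a)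
     \<Rightarrow> 'a set \<Rightarrow> (nat \<Rightarrow> 'a) set" where
  "ideal_times_S R w \<sigma> \<delta> I =
     {finsum (skew_ps R w \<sigma> \<delta>)
        (\<lambda>k. const_ps R (a k) \<otimes>\<^bsub>skew_ps R w \<sigma> \<delta>\<^esub> s k) {..<(m::nat)} | m a s.
        \<forall>k<m. a k \<in> I \<and> s k \<in> bseries R w}"

definition ps_closure :: "('a,'m) ring_scheme \<Rightarrow> ('a \<Rightarrow> ereal) \<Rightarrow> (nat \<Rightarrow> 'a) set \<Rightarrow> (nat \<Rightarrow> 'a) set" where
  "ps_closure R w A = {s \<in> bseries R w. \<forall>N::real. \<exists>t\<in>A.
       ps_filt w (\<lambda>n. s n \<ominus>\<^bsub>R\<^esub> t n) \<ge> ereal N}"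

definition quot_filt :: "('a \<Rightarrow> ereal) \<Rightarrow> 'a set \<Rightarrow> ereal" where
  "quot_filt w C = Sup (w ` C)"

definition quot_map :: "('a,'m) ring_scheme \<Rightarrow> 'a set \<Rightarrow> ('a \<Rightarrow> 'a) \<Rightarrow> 'a set \<Rightarrow> 'a set" where
  "quot_map R I f C = I +>\<^bsub>R\<^esub> f (SOME r. r \<in> C)"

end

theory Submission
  imports Defs
begin

locale fring = ring R for R :: "('a,'m) ring_scheme" (structure) +
  fixes w :: "'a \<Rightarrow> ereal"
  assumes filt: "filtration R w" and sep: "separated R w" and compl: "fcomplete R w"
begin

lemma w_zero[simp]: "w \<zero> = \<infinity>"
  using filt unfolding filtration_def by blast

lemma w_add: "x \<in> carrier R \<Longrightarrow> y \<in> carrier R \<Longrightarrow> min (w x) (w y) \<le> w (x \<oplus> y)"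
  using filt unfolding filtration_def by blast

lemma w_mult: "x \<in> carrier R \<Longrightarrow> y \<in> carrier R \<Longrightarrow> w x + w y \<le> w (x \<otimes> y)"
  using filt unfolding filtration_def by blast

lemma w_neg[simp]: "x \<in> carrier R \<Longrightarrow> w (\<ominus> x) = w x"
  using filt unfolding filtration_def by blast

lemma w_one: "0 \<le> w \<one>"
  using filt unfolding filtration_def by blast

lemma w_val: "x \<in> carrier R \<Longrightarrow> w x = \<infinity> \<or> (\<exists>n::int. w x = ereal (real_of_int n))"
  using filt unfolding filtration_def by blast

lemma w_not_minf[simp]: "x \<in> carrier R \<Longrightarrow> w x \<noteq> -\<infinity>"
  using w_val by fastforce

lemma w_inf: "x \<in> carrier R \<Longrightarrow> w x = \<infinity> \<Longrightarrow> x = \<zero>"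
  using sep unfolding separated_def by blast

lemma ereal_top_le: "(\<And>N::real. ereal N \<le> x) \<Longrightarrow> x = \<infinity>"
  by (metis ereal_infty_less_eq(1) ereal_top)

lemma w_big: "x \<in> carrier R \<Longrightarrow> (\<And>N::real. ereal N \<le> w x) \<Longrightarrow> x = \<zero>"
  using w_inf ereal_top_le by blast

lemma w_add_ge: "x \<in> carrier R \<Longrightarrow> y \<in> carrier R \<Longrightarrow> B \<le> w x \<Longrightarrow> B \<le> w y \<Longrightarrow> B \<le> w (x \<oplus> y)"
  by (meson min.boundedI order.trans w_add)

lemma w_minus_ge: "x \<in> carrier R \<Longrightarrow> y \<in> carrier R \<Longrightarrow> B \<le> w x \<Longrightarrow> B \<le> w y \<Longrightarrow> B \<le> w (x \<ominus> y)"
  unfolding a_minus_def by (simp add: w_add_ge)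

lemma w_mult_ge: "x \<in> carrier R \<Longrightarrow> y \<in> carrier R \<Longrightarrow> ereal A \<le> w x \<Longrightarrow> ereal B \<le> w y
   \<Longrightarrow> ereal (A + B) \<le> w (x \<otimes> y)"
proof -
  assume a: "x \<in> carrier R" "y \<in> carrier R" "ereal A \<le> w x" "ereal B \<le> w y"
  have "ereal A + ereal B \<le> w x + w y" using a(3,4) by (rule add_mono)
  also have "\<dots> \<le> w (x \<otimes> y)" using w_mult a by blast
  finally show ?thesis by simp
qed

lemma w_minus_sym: "x \<in> carrier R \<Longrightarrow> y \<in> carrier R \<Longrightarrow> w (x \<ominus> y) = w (y \<ominus> x)"
  by (metis minus_minus a_minus_def minus_add add.inv_closed a_comm w_neg add.m_closed)

lemma finsum_bound:
  assumes "finite A" "f \<in> A \<rightarrow> carrier R" "\<And>i. i \<in> A \<Longrightarrow> B \<le> w (f i)"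
  shows "B \<le> w (finsum R f A)"
  using assms
proof (induction A rule: finite_induct)
  case empty then show ?case by simp
next
  case (insert x F)
  then show ?case by (simp add: finsum_insert w_add_ge finsum_closed)
qed

definition tends :: "(nat \<Rightarrow> 'a) \<Rightarrow> bool" where
  "tends a \<longleftrightarrow> (\<forall>N::real. \<exists>M. \<forall>i\<ge>M. ereal N \<le> w (a i))"

definition psum :: "(nat \<Rightarrow> 'a) \<Rightarrow> nat \<Rightarrow> 'a" where
  "psum a m = finsum R a {..<m}"

lemma psum_carrier[simp]: "(\<And>i. a i \<in> carrier R) \<Longrightarrow> psum a m \<in> carrier R"
  unfolding psum_def by (simp add: Pi_def)

lemma psum_diff:
  assumes "\<And>i. a i \<in> carrier R" "n \<le> m"
  shows "psum a m \<ominus> psum a n = finsum R a {n..<m}"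
proof -
  have "{..<m} = {..<n} \<union> {n..<m}" using assms(2) by auto
  then have "psum a m = psum a n \<oplus> finsum R a {n..<m}"
    unfolding psum_def using assms(1) by (simp add: finsum_Un_disjoint Pi_def ivl_disj_int)
  then show ?thesis using assms(1)
    by (simp add: Pi_def a_minus_def a_comm[of "psum a n"] a_assoc finsum_closed l_neg r_neg)
qed

lemma fconv_unique:
  assumes "fconv R w b L" "fconv R w b L'" "\<And>n. b n \<in> carrier R"
  shows "L = L'"
proof -
  have L: "L \<in> carrier R" "L' \<in> carrier R" using assms unfolding fconv_def by auto
  have "\<And>N::real. ereal N \<le> w (L' \<ominus> L)"
  proof -
    fix N :: real
    obtain M1 where M1: "\<forall>n\<ge>M1. ereal N \<le> w (b n \<ominus> L)" using assms(1) unfolding fconv_def by blast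
    obtain M2 where M2: "\<forall>n\<ge>M2. ereal N \<le> w (b n \<ominus> L')" using assms(2) unfolding fconv_def by blast
    let ?n = "max M1 M2"
    have e: "L' \<ominus> L = (b ?n \<ominus> L) \<ominus> (b ?n \<ominus> L')"
      using L assms(3)[of ?n] by (simp add: a_minus_def minus_add a_ac r_neg1 r_neg2 r_neg)
    show "ereal N \<le> w (L' \<ominus> L)" unfolding e
      by (rule w_minus_ge) (use L assms(3) M1 M2 in auto)
  qed
  then have "L' \<ominus> L = \<zero>" using w_big L by simp
  then show ?thesis using L by (metis r_neg1 a_minus_def add.inv_closed minus_minus r_zero a_comm l_neg
      add.m_assoc)
qed

lemma tends_cauchy:
  assumes "\<And>i. a i \<in> carrier R" "tends a"
  shows "fcauchy R w (psum a)"
  unfolding fcauchy_def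
proof
  fix N :: real
  obtain M where M: "\<forall>i\<ge>M. ereal N \<le> w (a i)" using assms(2) unfolding tends_def by blast
  have *: "ereal N \<le> w (psum a m \<ominus> psum a n)" if "M \<le> n" "n \<le> m" for m n
    using that M assms(1) by (subst psum_diff) (auto intro!: finsum_bound)
  show "\<exists>M. \<forall>m\<ge>M. \<forall>n\<ge>M. ereal N \<le> w (psum a m \<ominus> psum a n)"
  proof (intro exI allI impI)
    fix m n assume "M \<le> m" "M \<le> n"
    then show "ereal N \<le> w (psum a m \<ominus> psum a n)"
    proof (cases "n \<le> m")
      case True then show ?thesis using * \<open>M \<le> n\<close> by blast
    next
      case False then show ?thesis using *[of m n] \<open>M \<le> m\<close> assms(1) w_minus_sym[of "psum a m" "psum a n"] by simp
    qed
  qed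
qed

lemma fsum_eqI:
  assumes "\<And>i. a i \<in> carrier R" "fconv R w (psum a) L"
  shows "fsum R w a = L"
  unfolding fsum_def using assms fconv_unique[of "psum a" L] unfolding psum_def[symmetric]
  by (metis (no_types, lifting) psum_carrier the_equality psum_def)

lemma fsum_conv:
  assumes "\<And>i. a i \<in> carrier R" "tends a"
  shows "fconv R w (psum a) (fsum R w a)" "fsum R w a \<in> carrier R"
proof -
  obtain L where "fconv R w (psum a) L"
    using compl tends_cauchy[OF assms] assms(1) unfolding fcomplete_def by force
  then show "fconv R w (psum a) (fsum R w a)" "fsum R w a \<in> carrier R"
    using fsum_eqI[OF assms(1)] unfolding fconv_def by auto
qed

lemma sub_sub: "x \<in> carrier R \<Longrightarrow> p \<in> carrier R \<Longrightarrow> p \<ominus> (p \<ominus> x) = x"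
  by algebra

lemma fsum_carrier: "(\<And>i. a i \<in> carrier R) \<Longrightarrow> tends a \<Longrightarrow> fsum R w a \<in> carrier R"
  using fsum_conv by blast

lemma fsum_bound:
  assumes "\<And>i. a i \<in> carrier R" "tends a" "\<And>i. ereal B \<le> w (a i)"
  shows "ereal B \<le> w (fsum R w a)"
proof -
  have c: "fconv R w (psum a) (fsum R w a)" "fsum R w a \<in> carrier R" using fsum_conv assms by auto
  then obtain M where M: "ereal B \<le> w (psum a M \<ominus> fsum R w a)" unfolding fconv_def by blast
  have e: "fsum R w a = psum a M \<ominus> (psum a M \<ominus> fsum R w a)"
    using c(2) assms(1) by (simp add: sub_sub)
  have p: "ereal B \<le> w (psum a M)" unfolding psum_def using assms by (intro finsum_bound) auto
  have "ereal B \<le> w (psum a M \<ominus> (psum a M \<ominus> fsum R w a))"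
    by (rule w_minus_ge[OF _ _ p M]) (use c assms(1) in auto)
  then show ?thesis by (metis e)
qed

definition addmap :: "('a \<Rightarrow> 'a) \<Rightarrow> bool" where
  "addmap f \<longleftrightarrow> (\<forall>x\<in>carrier R. f x \<in> carrier R) \<and>
     (\<forall>x\<in>carrier R. \<forall>y\<in>carrier R. f (x \<oplus> y) = f x \<oplus> f y)"

lemma addmap_zero: "addmap f \<Longrightarrow> f \<zero> = \<zero>"
proof -
  assume a: "addmap f"
  then have "f \<zero> \<oplus> f \<zero> = f \<zero> \<oplus> \<zero>" unfolding addmap_def
    by (metis zero_closed l_zero r_zero)
  then show ?thesis using a unfolding addmap_def by (metis zero_closed add.l_cancel)
qed

lemma addmap_neg: "addmap f \<Longrightarrow> x \<in> carrier R \<Longrightarrow> f (\<ominus> x) = \<ominus> f x"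
proof -
  assume a: "addmap f" "x \<in> carrier R"
  then have "f (\<ominus> x) \<oplus> f x = \<zero>" using addmap_zero unfolding addmap_def
    by (metis add.inv_closed l_neg)
  then show ?thesis using a unfolding addmap_def by (metis add.inv_closed minus_equality)
qed

lemma addmap_minus: "addmap f \<Longrightarrow> x \<in> carrier R \<Longrightarrow> y \<in> carrier R \<Longrightarrow> f (x \<ominus> y) = f x \<ominus> f y"
  using addmap_neg unfolding a_minus_def addmap_def by simp

lemma addmap_finsum: assumes "finite A" "addmap f" "g \<in> A \<rightarrow> carrier R" shows
    "f (finsum R g A) = finsum R (\<lambda>i. f (g i)) A"
  using assms proof (induction A rule: finite_induct)
  case empty then show ?case by (simp add: addmap_zero)
next
  case (insert x F)
  then have "(\<lambda>i. f (g i)) \<in> F \<rightarrow> carrier R" "f (g x) \<in> carrier R" unfolding addmap_def by auto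
  with insert show ?case unfolding addmap_def by (simp add: finsum_insert finsum_closed)
qed

lemma fsum_addmap:
  assumes f: "addmap f" "\<And>x B. x \<in> carrier R \<Longrightarrow> ereal B \<le> w x \<Longrightarrow> ereal (B + K) \<le> w (f x)"
    and a: "\<And>i. a i \<in> carrier R" "tends a"
  shows "tends (\<lambda>i. f (a i))" "fsum R w (\<lambda>i. f (a i)) = f (fsum R w a)"
proof -
  show "tends (\<lambda>i. f (a i))" unfolding tends_def
  proof
    fix N :: real
    obtain M where M: "\<forall>i\<ge>M. ereal (N - K) \<le> w (a i)" using a(2) unfolding tends_def by blast
    show "\<exists>M. \<forall>i\<ge>M. ereal N \<le> w (f (a i))"
    proof (intro exI allI impI)
      fix i assume "M \<le> i"
      then have "ereal (N - K + K) \<le> w (f (a i))" using M a(1) by (intro f(2)) auto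
      then show "ereal N \<le> w (f (a i))" by simp
    qed
  qed
  have fa: "\<And>i. f (a i) \<in> carrier R" using f(1) a(1) unfolding addmap_def by auto
  have c: "fconv R w (psum a) (fsum R w a)" "fsum R w a \<in> carrier R" using fsum_conv a by auto
  have ps: "psum (\<lambda>i. f (a i)) m = f (psum a m)" for m
    unfolding psum_def using addmap_finsum[OF _ f(1), of "{..<m}" a] a(1) by simp
  have "fconv R w (psum (\<lambda>i. f (a i))) (f (fsum R w a))"
    unfolding fconv_def
  proof (intro conjI allI)
    show "f (fsum R w a) \<in> carrier R" using c f(1) unfolding addmap_def by auto
    fix N :: real
    obtain M where M: "\<forall>n\<ge>M. ereal (N - K) \<le> w (psum a n \<ominus> fsum R w a)" using c(1) unfolding fconv_def by blast
    show "\<exists>M. \<forall>n\<ge>M. ereal N \<le> w (psum (\<lambda>i. f (a i)) n \<ominus> f (fsum R w a))"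
    proof (intro exI allI impI)
      fix n assume "M \<le> n"
      then have "ereal (N - K + K) \<le> w (f (psum a n \<ominus> fsum R w a))"
        using M a(1) c(2) by (intro f(2)) auto
      moreover have "f (psum a n \<ominus> fsum R w a) = psum (\<lambda>i. f (a i)) n \<ominus> f (fsum R w a)"
        using addmap_minus[OF f(1), of "psum a n" "fsum R w a"] ps a(1) c(2) by simp
      ultimately show "ereal N \<le> w (psum (\<lambda>i. f (a i)) n \<ominus> f (fsum R w a))" by simp
    qed
  qed
  then show "fsum R w (\<lambda>i. f (a i)) = f (fsum R w a)" by (rule fsum_eqI[OF fa])
qed

lemma tends_add: "(\<And>i. a i \<in> carrier R) \<Longrightarrow> (\<And>i. b i \<in> carrier R) \<Longrightarrow> tends a \<Longrightarrow> tends b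
   \<Longrightarrow> tends (\<lambda>i. a i \<oplus> b i)"
  unfolding tends_def
proof (intro allI)
  fix N :: real
  assume a: "\<And>i. a i \<in> carrier R" "\<And>i. b i \<in> carrier R" and t: "\<forall>N. \<exists>M. \<forall>i\<ge>M. ereal N \<le> w (a i)"
    "\<forall>N. \<exists>M. \<forall>i\<ge>M. ereal N \<le> w (b i)"
  obtain M1 M2 where "\<forall>i\<ge>M1. ereal N \<le> w (a i)" "\<forall>i\<ge>M2. ereal N \<le> w (b i)" using t by blast
  then show "\<exists>M. \<forall>i\<ge>M. ereal N \<le> w (a i \<oplus> b i)"
    using a by (intro exI[of _ "max M1 M2"]) (auto intro!: w_add_ge)
qed


end

context fring begin
lemma fsum_add:
  assumes "\<And>i. a i \<in> carrier R" "\<And>i. b i \<in> carrier R" "tends a" "tends b"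
  shows "fsum R w (\<lambda>i. a i \<oplus> b i) = fsum R w a \<oplus> fsum R w b"
proof -
  have ca: "fconv R w (psum a) (fsum R w a)" "fsum R w a \<in> carrier R" using fsum_conv[OF assms(1,3)] by auto
  have cb: "fconv R w (psum b) (fsum R w b)" "fsum R w b \<in> carrier R" using fsum_conv[OF assms(2,4)] by auto
  have ps: "psum (\<lambda>i. a i \<oplus> b i) m = psum a m \<oplus> psum b m" for m
    unfolding psum_def using assms(1,2) by (simp add: finsum_addf Pi_def)
  have e: "(x \<oplus> y) \<ominus> (u \<oplus> v) = (x \<ominus> u) \<oplus> (y \<ominus> v)" if "x \<in> carrier R" "y \<in> carrier R" "u \<in> carrier R" "v \<in> carrier R" for x y u v
    using that by algebra
  have "fconv R w (psum (\<lambda>i. a i \<oplus> b i)) (fsum R w a \<oplus> fsum R w b)"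
    unfolding fconv_def
  proof (intro conjI allI)
    show "fsum R w a \<oplus> fsum R w b \<in> carrier R" using ca cb by auto
    fix N :: real
    obtain M1 where M1: "\<forall>n\<ge>M1. ereal N \<le> w (psum a n \<ominus> fsum R w a)" using ca unfolding fconv_def by auto
    obtain M2 where M2: "\<forall>n\<ge>M2. ereal N \<le> w (psum b n \<ominus> fsum R w b)" using cb unfolding fconv_def by auto
    show "\<exists>M. \<forall>n\<ge>M. ereal N \<le> w (psum (\<lambda>i. a i \<oplus> b i) n \<ominus> (fsum R w a \<oplus> fsum R w b))"
    proof (intro exI allI impI)
      fix n assume n: "max M1 M2 \<le> n"
      have "ereal N \<le> w ((psum a n \<ominus> fsum R w a) \<oplus> (psum b n \<ominus> fsum R w b))"
        using M1 M2 ca cb assms(1,2) n by (intro w_add_ge) auto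
      then show "ereal N \<le> w (psum (\<lambda>i. a i \<oplus> b i) n \<ominus> (fsum R w a \<oplus> fsum R w b))"
        unfolding ps using e[of "psum a n" "psum b n" "fsum R w a" "fsum R w b"] ca cb assms(1,2) by simp
    qed
  qed
  then show ?thesis by (intro fsum_eqI) (use assms(1,2) in auto)
qed


end

context fring begin
lemma fsum_finite:
  assumes "\<And>i. a i \<in> carrier R" "\<And>i. m \<le> i \<Longrightarrow> a i = \<zero>"
  shows "fsum R w a = finsum R a {..<m}" "tends a"
proof -
  have ps: "psum a n = finsum R a {..<m}" if "m \<le> n" for n
  proof -
    have "{..<n} = {..<m} \<union> {m..<n}" using that by auto
    then have "psum a n = psum a m \<oplus> finsum R a {m..<n}"
      unfolding psum_def using assms(1) by (simp add: finsum_Un_disjoint Pi_def ivl_disj_int)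
    also have "finsum R a {m..<n} = \<zero>" using assms by (simp add: finsum_zero cong: finsum_cong)
    finally show ?thesis unfolding psum_def using assms(1) by (simp add: Pi_def finsum_closed)
  qed
  have "fconv R w (psum a) (finsum R a {..<m})" unfolding fconv_def
    using assms(1) ps by (auto simp: Pi_def finsum_closed r_neg a_minus_def intro!: exI[of _ m])
  then show "fsum R w a = finsum R a {..<m}" by (rule fsum_eqI[OF assms(1)])
  show "tends a" unfolding tends_def using assms(2) by (intro allI exI[of _ m]) simp
qed

lemma fsum_zero[simp]: "fsum R w (\<lambda>i. \<zero>) = \<zero>"
  using fsum_finite[of "\<lambda>i. \<zero>" 0] by simp


end

context fring begin
lemma fsum_single:
  assumes "x \<in> carrier R"
  shows "fsum R w (\<lambda>i. if i = k then x else \<zero>) = x" "tends (\<lambda>i. if i = k then x else \<zero>)"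
proof -
  have "fsum R w (\<lambda>i. if i = k then x else \<zero>) = finsum R (\<lambda>i. if i = k then x else \<zero>) {..<Suc k}"
    "tends (\<lambda>i. if i = k then x else \<zero>)"
    using fsum_finite[of "\<lambda>i. if i = k then x else \<zero>" "Suc k"] assms by auto
  moreover have "finsum R (\<lambda>i. if i = k then x else \<zero>) {..<Suc k} = x"
    using add.finprod_singleton_swap[of k "{..<Suc k}" "\<lambda>i. x"] assms by simp
  ultimately show "fsum R w (\<lambda>i. if i = k then x else \<zero>) = x" "tends (\<lambda>i. if i = k then x else \<zero>)" by auto
qed


end

context fring begin
lemma fsum_shift:
  assumes "\<And>i. a i \<in> carrier R" "tends a"
  shows "fsum R w (\<lambda>i. if i = 0 then \<zero> else a (i - 1)) = fsum R w a"
    "tends (\<lambda>i. if i = 0 then \<zero> else a (i - 1))"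
proof -
  let ?b = "\<lambda>i. if i = 0 then \<zero> else a (i - 1)"
  have bc: "\<And>i. ?b i \<in> carrier R" using assms by auto
  have ps: "psum ?b (Suc n) = psum a n" for n
  proof -
    have "{..<Suc n} = insert 0 (Suc ` {..<n})" by (auto simp: image_iff less_Suc_eq_0_disj)
    then have "psum ?b (Suc n) = finsum R ?b (Suc ` {..<n})" unfolding psum_def using bc
      by (simp add: finsum_insert Pi_def finsum_closed image_iff)
    also have "\<dots> = finsum R (\<lambda>i. ?b (Suc i)) {..<n}" by (rule finsum_reindex) (use bc in auto)
    finally show ?thesis unfolding psum_def by simp
  qed
  have c: "fconv R w (psum a) (fsum R w a)" "fsum R w a \<in> carrier R" using fsum_conv assms by auto
  have "fconv R w (psum ?b) (fsum R w a)" unfolding fconv_def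
  proof (intro conjI allI)
    show "fsum R w a \<in> carrier R" by fact
    fix N :: real
    obtain M where M: "\<forall>n\<ge>M. ereal N \<le> w (psum a n \<ominus> fsum R w a)" using c unfolding fconv_def by blast
    show "\<exists>M. \<forall>n\<ge>M. ereal N \<le> w (psum ?b n \<ominus> fsum R w a)"
    proof (intro exI allI impI)
      fix n assume "Suc M \<le> n"
      then obtain n' where "n = Suc n'" "M \<le> n'" by (cases n) auto
      then show "ereal N \<le> w (psum ?b n \<ominus> fsum R w a)" using M ps by simp
    qed
  qed
  then show "fsum R w ?b = fsum R w a" by (rule fsum_eqI[OF bc])
  show "tends ?b" unfolding tends_def
  proof
    fix N :: real
    obtain M where "\<forall>i\<ge>M. ereal N \<le> w (a i)" using assms(2) unfolding tends_def by blast
    then show "\<exists>M. \<forall>i\<ge>M. ereal N \<le> w (?b i)" by (intro exI[of _ "Suc M"]) auto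
  qed
qed


end

context fring begin
lemma fsum_in_set:
  assumes "additive_subgroup J R" "fclosed R w J" "\<And>i. a i \<in> J" "tends a"
  shows "fsum R w a \<in> J"
proof -
  have ac: "\<And>i. a i \<in> carrier R" using assms(1,3) additive_subgroup.a_subset by blast
  have "psum a m \<in> J" for m
    unfolding psum_def
  proof (induction m)
    case 0 then show ?case using assms(1) by (simp add: additive_subgroup.zero_closed)
  next
    case (Suc m)
    then show ?case using assms(1,3) ac by (simp add: finsum_Suc2 Pi_def lessThan_Suc finsum_insert
        finsum_closed additive_subgroup.a_closed a_comm)
  qed
  then show ?thesis using assms(2) fsum_conv[OF ac assms(4)] unfolding fclosed_def by blast
qed

end

locale sk = fring +
  fixes \<sigma> \<delta> :: "'a \<Rightarrow> 'a"
  assumes skew: "skew_derivation R \<sigma> \<delta>" and comp: "compatible R w \<sigma> \<delta>"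
begin

abbreviation cf where "cf \<equiv> skw_coef R \<sigma> \<delta>"

lemma sig_iso: "\<sigma> \<in> ring_iso R R" using skew unfolding skew_derivation_def by blast
lemma sig_hom: "\<sigma> \<in> ring_hom R R" using sig_iso unfolding ring_iso_def by blast
lemma sig_bij: "bij_betw \<sigma> (carrier R) (carrier R)" using sig_iso unfolding ring_iso_def by blast
lemma sig_closed[simp]: "x \<in> carrier R \<Longrightarrow> \<sigma> x \<in> carrier R" by (rule ring_hom_closed[OF sig_hom])
lemma sig_add: "x \<in> carrier R \<Longrightarrow> y \<in> carrier R \<Longrightarrow> \<sigma> (x \<oplus> y) = \<sigma> x \<oplus> \<sigma> y"
  by (rule ring_hom_add[OF sig_hom])
lemma sig_mult: "x \<in> carrier R \<Longrightarrow> y \<in> carrier R \<Longrightarrow> \<sigma> (x \<otimes> y) = \<sigma> x \<otimes> \<sigma> y"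
  by (rule ring_hom_mult[OF sig_hom])
lemma sig_one[simp]: "\<sigma> \<one> = \<one>" by (rule ring_hom_one[OF sig_hom])
lemma sig_addmap: "addmap \<sigma>" unfolding addmap_def by (simp add: sig_add)
lemma sig_zero[simp]: "\<sigma> \<zero> = \<zero>" using addmap_zero[OF sig_addmap] .
lemma sig_neg: "x \<in> carrier R \<Longrightarrow> \<sigma> (\<ominus> x) = \<ominus> \<sigma> x" using addmap_neg[OF sig_addmap] .

lemma del_closed[simp]: "x \<in> carrier R \<Longrightarrow> \<delta> x \<in> carrier R" using skew unfolding skew_derivation_def by blast
lemma del_add: "x \<in> carrier R \<Longrightarrow> y \<in> carrier R \<Longrightarrow> \<delta> (x \<oplus> y) = \<delta> x \<oplus> \<delta> y"
  using skew unfolding skew_derivation_def by blast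
lemma del_mult: "x \<in> carrier R \<Longrightarrow> y \<in> carrier R \<Longrightarrow> \<delta> (x \<otimes> y) = \<delta> x \<otimes> y \<oplus> \<sigma> x \<otimes> \<delta> y"
  using skew unfolding skew_derivation_def by blast
lemma del_addmap: "addmap \<delta>" unfolding addmap_def by (simp add: del_add)
lemma del_zero[simp]: "\<delta> \<zero> = \<zero>" using addmap_zero[OF del_addmap] .
lemma del_neg: "x \<in> carrier R \<Longrightarrow> \<delta> (\<ominus> x) = \<ominus> \<delta> x" using addmap_neg[OF del_addmap] .
lemma del_one[simp]: "\<delta> \<one> = \<zero>"
proof -
  have "\<delta> \<one> = \<delta> \<one> \<oplus> \<delta> \<one>" using del_mult[of \<one> \<one>] by simp
  then have "\<delta> \<one> \<oplus> \<delta> \<one> = \<delta> \<one> \<oplus> \<zero>" by simp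
  then show ?thesis by (metis del_closed one_closed zero_closed add.l_cancel)
qed

lemma deg_step:
  assumes d: "fdeg R w d > 0" "d \<zero> = \<zero>" "\<And>x. x \<in> carrier R \<Longrightarrow> d x \<in> carrier R"
    and x: "x \<in> carrier R" "ereal B \<le> w x"
  shows "ereal (B + 1) \<le> w (d x)"
proof (cases "x = \<zero>")
  case True then show ?thesis using d by simp
next
  case False
  have "0 < w (d x) - w x" using d(1) x False unfolding fdeg_def by (auto dest: less_INF_D)
  moreover obtain n :: int where n: "w x = ereal (real_of_int n)"
    using w_val[OF x(1)] w_inf[OF x(1)] False by blast
  moreover have "w (d x) = \<infinity> \<or> (\<exists>m::int. w (d x) = ereal (real_of_int m))" using w_val d(3) x by blast
  ultimately show ?thesis
  proof (elim disjE exE)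
    assume "w (d x) = \<infinity>" then show ?thesis by simp
  next
    fix m :: int assume m: "w (d x) = ereal (real_of_int m)" and p: "0 < w (d x) - w x"
    have "n < m" using p n m by simp
    then have "real_of_int n + 1 \<le> real_of_int m" by linarith
    then show ?thesis using x(2) n m by simp
  qed
qed

lemma sig_bound: "x \<in> carrier R \<Longrightarrow> ereal B \<le> w x \<Longrightarrow> ereal (B + 1) \<le> w (\<sigma> x \<ominus> x)"
  using comp unfolding compatible_def
  by (intro deg_step[where d = "\<lambda>x. \<sigma> x \<ominus> x"]) (auto simp: r_neg a_minus_def)

lemma del_bound: "x \<in> carrier R \<Longrightarrow> ereal B \<le> w x \<Longrightarrow> ereal (B + 1) \<le> w (\<delta> x)"
  using comp unfolding compatible_def by (intro deg_step[where d = \<delta>]) auto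

lemma sig_bound0: "x \<in> carrier R \<Longrightarrow> ereal B \<le> w x \<Longrightarrow> ereal B \<le> w (\<sigma> x)"
proof -
  assume x: "x \<in> carrier R" "ereal B \<le> w x"
  have "ereal B \<le> ereal (B + 1)" by simp
  then have "ereal B \<le> w (\<sigma> x \<ominus> x)" using sig_bound[OF x] by (rule order.trans)
  then have "ereal B \<le> w ((\<sigma> x \<ominus> x) \<oplus> x)" using x by (intro w_add_ge) auto
  moreover have "(\<sigma> x \<ominus> x) \<oplus> x = \<sigma> x" using x(1) sig_closed[OF x(1)] by algebra
  ultimately show ?thesis by simp
qed

lemma cf_carrier[simp]: "a \<in> carrier R \<Longrightarrow> cf i k a \<in> carrier R"
  by (induction i arbitrary: k) auto

lemma cf_0[simp]: "cf i k \<zero> = \<zero>"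
  by (induction i arbitrary: k) auto

lemma cf_add: "a \<in> carrier R \<Longrightarrow> b \<in> carrier R \<Longrightarrow> cf i k (a \<oplus> b) = cf i k a \<oplus> cf i k b"
proof (induction i arbitrary: k)
  case 0 then show ?case by simp
next
  case (Suc i)
  have e: "(p \<oplus> q) \<oplus> (r \<oplus> s) = (p \<oplus> r) \<oplus> (q \<oplus> s)" if "p \<in> carrier R" "q \<in> carrier R" "r \<in> carrier R" "s \<in> carrier R" for p q r s
    using that by algebra
  show ?case using Suc by (simp add: sig_add del_add e)
qed

lemma cf_addmap: "addmap (cf i k)" unfolding addmap_def by (simp add: cf_add)

lemma cf_high: "i < k \<Longrightarrow> cf i k a = \<zero>"
  by (induction i arbitrary: k) auto

lemma cf_bound: "a \<in> carrier R \<Longrightarrow> ereal B \<le> w a \<Longrightarrow> ereal (B + real i - real k) \<le> w (cf i k a)"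
proof (induction i arbitrary: k)
  case 0 then show ?case by (cases k) auto
next
  case (Suc i)
  have t1: "ereal (B + real (Suc i) - real k) \<le> w (if k = 0 then \<zero> else \<sigma> (cf i (k - 1) a))"
  proof (cases k)
    case 0 then show ?thesis by simp
  next
    case (Suc k')
    have "ereal (B + real i - real k') \<le> w (\<sigma> (cf i k' a))" using Suc.IH Suc.prems by (intro sig_bound0) auto
    then show ?thesis using Suc by (simp add: add_diff_eq)
  qed
  have "ereal (B + real i - real k + 1) \<le> w (\<delta> (cf i k a))" using Suc.IH Suc.prems by (intro del_bound) auto
  then have t2: "ereal (B + real (Suc i) - real k) \<le> w (\<delta> (cf i k a))" by (simp add: algebra_simps)
  show ?case using t1 t2 Suc.prems by (simp only: skw_coef.simps) (intro w_add_ge, auto)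
qed

lemma cf_one: "cf i k \<one> = (if k = i then \<one> else \<zero>)"
  by (induction i arbitrary: k) auto

end

lemma bseries_growth_iff:
  fixes v :: "'b \<Rightarrow> ereal"
  shows "((\<lambda>n. v (r n) + ereal (real n / 2)) \<longlongrightarrow> \<infinity>) sequentially \<longleftrightarrow>
    (\<forall>N::real. \<exists>M. \<forall>n\<ge>M. ereal (N - real n / 2) \<le> v (r n))"
proof -
  have e: "ereal N < v (r n) + ereal (real n / 2) \<longleftrightarrow> ereal (N - real n / 2) < v (r n)" for N n
    by (cases "v (r n)") auto
  have e2: "ereal N \<le> v (r n) + ereal (real n / 2) \<longleftrightarrow> ereal (N - real n / 2) \<le> v (r n)" for N n
    by (cases "v (r n)") auto
  show ?thesis
    unfolding tendsto_PInfty eventually_sequentially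
  proof
    assume a: "\<forall>N. \<exists>M. \<forall>n\<ge>M. ereal N < v (r n) + ereal (real n / 2)"
    show "\<forall>N::real. \<exists>M. \<forall>n\<ge>M. ereal (N - real n / 2) \<le> v (r n)"
    proof
      fix N :: real
      obtain M where "\<forall>n\<ge>M. ereal N < v (r n) + ereal (real n / 2)" using a by blast
      then show "\<exists>M. \<forall>n\<ge>M. ereal (N - real n / 2) \<le> v (r n)" using e by (meson less_imp_le)
    qed
  next
    assume a: "\<forall>N::real. \<exists>M. \<forall>n\<ge>M. ereal (N - real n / 2) \<le> v (r n)"
    show "\<forall>N. \<exists>M. \<forall>n\<ge>M. ereal N < v (r n) + ereal (real n / 2)"
    proof
      fix N :: real
      obtain M where M: "\<forall>n\<ge>M. ereal (N + 1 - real n / 2) \<le> v (r n)" using a by blast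
      have "ereal N < v (r n) + ereal (real n / 2)" if "n \<ge> M" for n
      proof -
        have "ereal (N - real n / 2) < ereal (N + 1 - real n / 2)" by simp
        also have "\<dots> \<le> v (r n)" using M that by blast
        finally show ?thesis using e by blast
      qed
      then show "\<exists>M. \<forall>n\<ge>M. ereal N < v (r n) + ereal (real n / 2)" by blast
    qed
  qed
qed

lemma ps_filt_ge_iff:
  "ereal N \<le> ps_filt v r \<longleftrightarrow> (\<forall>n. ereal (N - real n / 2) \<le> v (r n))"
proof -
  have e2: "ereal N \<le> v (r n) + ereal (real n / 2) \<longleftrightarrow> ereal (N - real n / 2) \<le> v (r n)" for N n
    by (cases "v (r n)") auto
  show ?thesis unfolding ps_filt_def le_INF_iff using e2 by simp
qed

context sk begin

abbreviation S where "S \<equiv> skew_ps R w \<sigma> \<delta>"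

definition growth :: "(nat \<Rightarrow> 'a) \<Rightarrow> bool" where
  "growth r \<longleftrightarrow> (\<forall>N::real. \<exists>M. \<forall>n\<ge>M. ereal (N - real n / 2) \<le> w (r n))"

definition lb :: "(nat \<Rightarrow> 'a) \<Rightarrow> real \<Rightarrow> bool" where
  "lb r B \<longleftrightarrow> (\<forall>n. ereal (B - real n / 2) \<le> w (r n))"

lemma bseries_iff: "r \<in> bseries R w \<longleftrightarrow> (\<forall>n. r n \<in> carrier R) \<and> growth r"
  unfolding bseries_def growth_def using bseries_growth_iff[of w r] by simp

lemma S_carrier: "carrier S = bseries R w" unfolding skew_ps_def by simp
lemma S_add: "u \<oplus>\<^bsub>S\<^esub> v = (\<lambda>n. u n \<oplus> v n)" unfolding skew_ps_def by simp
lemma S_zero: "\<zero>\<^bsub>S\<^esub> = (\<lambda>n. \<zero>)" unfolding skew_ps_def by simp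
lemma S_one: "\<one>\<^bsub>S\<^esub> = (\<lambda>n. if n = 0 then \<one> else \<zero>)" unfolding skew_ps_def by simp

definition pt :: "(nat \<Rightarrow> 'a) \<Rightarrow> (nat \<Rightarrow> 'a) \<Rightarrow> nat \<Rightarrow> nat \<Rightarrow> nat \<Rightarrow> 'a" where
  "pt u v n j i = u i \<otimes> cf i (n - j) (v j)"

definition pm :: "(nat \<Rightarrow> 'a) \<Rightarrow> (nat \<Rightarrow> 'a) \<Rightarrow> nat \<Rightarrow> 'a" where
  "pm u v n = finsum R (\<lambda>j. fsum R w (pt u v n j)) {..n}"

lemma S_mult: "u \<otimes>\<^bsub>S\<^esub> v = pm u v" unfolding skew_ps_def pm_def pt_def by simp

lemma pt_carrier[simp]: "u i \<in> carrier R \<Longrightarrow> v j \<in> carrier R \<Longrightarrow> pt u v n j i \<in> carrier R"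
  unfolding pt_def by simp

lemma pt_zero: "u i \<in> carrier R \<Longrightarrow> i + j < n \<Longrightarrow> pt u v n j i = \<zero>"
  unfolding pt_def by (simp add: cf_high)

lemma pt_bound:
  assumes "u i \<in> carrier R" "v j \<in> carrier R" "ereal (P - real i / 2) \<le> w (u i)"
    "ereal (Q - real j / 2) \<le> w (v j)" "j \<le> n"
  shows "ereal (P + Q + (real i + real j) / 2 - real n) \<le> w (pt u v n j i)"
proof -
  have "ereal (Q - real j / 2 + real i - real (n - j)) \<le> w (cf i (n - j) (v j))"
    using assms by (intro cf_bound) auto
  then have "ereal ((P - real i / 2) + (Q - real j / 2 + real i - real (n - j))) \<le> w (pt u v n j i)"
    unfolding pt_def using assms by (intro w_mult_ge) auto
  moreover have "(P - real i / 2) + (Q - real j / 2 + real i - real (n - j)) = P + Q + (real i + real j) / 2 - real n"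
    using assms(5) by (simp add: of_nat_diff field_simps)
  ultimately show ?thesis by simp
qed

lemma growth_lb:
  assumes "\<And>n. r n \<in> carrier R" "growth r"
  shows "\<exists>B. lb r B"
proof -
  obtain M where M: "\<forall>n\<ge>M. ereal (0 - real n / 2) \<le> w (r n)" using assms(2) unfolding growth_def by blast
  have "\<exists>b. ereal (b - real n / 2) \<le> w (r n)" for n
  proof (cases "w (r n) = \<infinity>")
    case True then show ?thesis by simp
  next
    case False
    then obtain x where "w (r n) = ereal x" using w_not_minf[OF assms(1)[of n]] by (cases "w (r n)") auto
    then show ?thesis by (intro exI[of _ "x + real n / 2"]) simp
  qed
  then obtain b where b: "\<And>n. ereal (b n - real n / 2) \<le> w (r n)" by metis
  define B where "B = Min (insert 0 (b ` {..<M}))"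
  have "ereal (B - real n / 2) \<le> w (r n)" for n
  proof (cases "n < M")
    case True
    then have "B \<le> b n" unfolding B_def by (intro Min_le) auto
    then have "ereal (B - real n / 2) \<le> ereal (b n - real n / 2)" by simp
    then show ?thesis using b order.trans by blast
  next
    case False
    have "B \<le> 0" unfolding B_def by (intro Min_le) auto
    then have "ereal (B - real n / 2) \<le> ereal (0 - real n / 2)" by simp
    then show ?thesis using M False order.trans by (meson not_less)
  qed
  then show ?thesis unfolding lb_def by blast
qed

lemma S_elem: "u \<in> carrier S \<Longrightarrow> (\<forall>n. u n \<in> carrier R) \<and> growth u"
  unfolding S_carrier bseries_iff by blast

lemma S_elem_lb: "u \<in> carrier S \<Longrightarrow> \<exists>B. lb u B"
  using S_elem growth_lb by blast

lemma pt_tends: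
  assumes "\<And>i. u i \<in> carrier R" "\<And>j. v j \<in> carrier R" "lb u A" "lb v B" "j \<le> n"
  shows "tends (pt u v n j)"
  unfolding tends_def
proof
  fix N :: real
  obtain M :: nat where M: "real M \<ge> 2 * (N - A - B + real n)" by (meson real_arch_simple)
  have "ereal N \<le> w (pt u v n j i)" if "i \<ge> M" for i
  proof -
    have "ereal (A + B + (real i + real j) / 2 - real n) \<le> w (pt u v n j i)"
      using assms unfolding lb_def by (intro pt_bound) auto
    moreover have "N \<le> A + B + (real i + real j) / 2 - real n"
      using M that of_nat_mono[OF that, where 'a=real] of_nat_0_le_iff[of j, where 'a=real] by (simp add: field_simps)
    ultimately show ?thesis by (meson ereal_less_eq(3) order.trans)
  qed
  then show "\<exists>M. \<forall>i\<ge>M. ereal N \<le> w (pt u v n j i)" by blast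
qed

lemma pm_bound:
  assumes "\<And>i. u i \<in> carrier R" "\<And>j. v j \<in> carrier R" "lb u A" "lb v B"
    "\<And>i j. j \<le> n \<Longrightarrow> ereal (Xb::real) \<le> w (pt u v n j i)"
  shows "ereal Xb \<le> w (pm u v n)"
  unfolding pm_def
  using assms by (intro finsum_bound fsum_bound pt_tends) (auto intro!: fsum_carrier pt_tends)

lemma pm_carrier[simp]:
  assumes "\<And>i. u i \<in> carrier R" "\<And>j. v j \<in> carrier R" "lb u A" "lb v B"
  shows "pm u v n \<in> carrier R"
  unfolding pm_def using assms by (intro finsum_closed) (auto intro!: fsum_carrier pt_tends)

lemma pm_lb:
  assumes "\<And>i. u i \<in> carrier R" "\<And>j. v j \<in> carrier R" "lb u A" "lb v B"
  shows "lb (pm u v) (A + B)"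
  unfolding lb_def
proof
  fix n
  show "ereal (A + B - real n / 2) \<le> w (pm u v n)"
  proof (rule pm_bound[OF assms])
    fix i j assume j: "j \<le> n"
    show "ereal (A + B - real n / 2) \<le> w (pt u v n j i)"
    proof (cases "i + j < n")
      case True then show ?thesis using assms by (simp add: pt_zero)
    next
      case False
      have "ereal (A + B + (real i + real j) / 2 - real n) \<le> w (pt u v n j i)"
        using assms j unfolding lb_def by (intro pt_bound) auto
      moreover have "A + B - real n / 2 \<le> A + B + (real i + real j) / 2 - real n"
        using False by (simp add: field_simps)
      ultimately show ?thesis by (meson ereal_less_eq(3) order.trans)
    qed
  qed
qed

lemma pm_growth:
  assumes "\<And>i. u i \<in> carrier R" "\<And>j. v j \<in> carrier R" "lb u A" "lb v B" "growth u" "growth v"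
  shows "growth (pm u v)"
  unfolding growth_def
proof
  fix N :: real
  obtain M1 where M1: "\<forall>i\<ge>M1. ereal ((N - B) - real i / 2) \<le> w (u i)" using assms(5) unfolding growth_def by blast
  obtain M2 where M2: "\<forall>j\<ge>M2. ereal ((N - A) - real j / 2) \<le> w (v j)" using assms(6) unfolding growth_def by blast
  have "ereal (N - real n / 2) \<le> w (pm u v n)" if n: "n \<ge> 2 * (M1 + M2)" for n
  proof (rule pm_bound[OF assms(1-4)])
    fix i j assume j: "j \<le> n"
    show "ereal (N - real n / 2) \<le> w (pt u v n j i)"
    proof (cases "i + j < n")
      case True then show ?thesis using assms by (simp add: pt_zero)
    next
      case False
      have le: "N - real n / 2 \<le> N + (real i + real j) / 2 - real n"
        using False by (simp add: field_simps)
      show ?thesis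
      proof (cases "i \<ge> M1")
        case True
        have "ereal ((N - B) + B + (real i + real j) / 2 - real n) \<le> w (pt u v n j i)"
          using assms j M1 True unfolding lb_def by (intro pt_bound) auto
        then show ?thesis using le by (simp add: order.trans[OF ereal_less_eq(3)[THEN iffD2, OF le]])
      next
        case False
        then have "j \<ge> M2" using \<open>\<not> i + j < n\<close> n by presburger
        have "ereal (A + (N - A) + (real i + real j) / 2 - real n) \<le> w (pt u v n j i)"
          using assms j M2 \<open>j \<ge> M2\<close> unfolding lb_def by (intro pt_bound) auto
        then show ?thesis using le by (simp add: order.trans[OF ereal_less_eq(3)[THEN iffD2, OF le]])
      qed
    qed
  qed
  then show "\<exists>M. \<forall>n\<ge>M. ereal (N - real n / 2) \<le> w (pm u v n)" by blast
qed

end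

context sk begin

lemma S_mem: "u \<in> carrier S \<longleftrightarrow> (\<forall>n. u n \<in> carrier R) \<and> growth u"
  unfolding S_carrier bseries_iff by blast

lemma S_val[simp]: "u \<in> carrier S \<Longrightarrow> u n \<in> carrier R"
  using S_mem by blast

lemma growth_add: "(\<And>n. u n \<in> carrier R) \<Longrightarrow> (\<And>n. v n \<in> carrier R) \<Longrightarrow> growth u \<Longrightarrow> growth v \<Longrightarrow> growth (\<lambda>n. u n \<oplus> v n)"
  unfolding growth_def
proof (intro allI)
  fix N :: real
  assume a: "\<And>n. u n \<in> carrier R" "\<And>n. v n \<in> carrier R" "\<forall>N. \<exists>M. \<forall>n\<ge>M. ereal (N - real n / 2) \<le> w (u n)"
    "\<forall>N. \<exists>M. \<forall>n\<ge>M. ereal (N - real n / 2) \<le> w (v n)"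
  obtain M1 M2 where "\<forall>n\<ge>M1. ereal (N - real n / 2) \<le> w (u n)" "\<forall>n\<ge>M2. ereal (N - real n / 2) \<le> w (v n)" using a by blast
  then show "\<exists>M. \<forall>n\<ge>M. ereal (N - real n / 2) \<le> w (u n \<oplus> v n)"
    using a by (intro exI[of _ "max M1 M2"]) (auto intro!: w_add_ge)
qed

lemma growth_neg: "(\<And>n. u n \<in> carrier R) \<Longrightarrow> growth u \<Longrightarrow> growth (\<lambda>n. \<ominus> u n)"
  unfolding growth_def by simp

lemma S_add_closed: "u \<in> carrier S \<Longrightarrow> v \<in> carrier S \<Longrightarrow> (\<lambda>n. u n \<oplus> v n) \<in> carrier S"
  unfolding S_mem by (auto intro!: growth_add)

lemma S_zero_closed: "(\<lambda>n. \<zero>) \<in> carrier S"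
  unfolding S_mem growth_def by simp

lemma S_abelian: "abelian_group S"
proof (rule abelian_groupI, goal_cases)
  case (1 x y) then show ?case unfolding S_add by (rule S_add_closed)
next
  case 2 then show ?case unfolding S_zero by (rule S_zero_closed)
next
  case (3 x y z) then show ?case unfolding S_add by (auto simp: a_assoc)
next
  case (4 x y) then show ?case unfolding S_add by (auto simp: a_comm)
next
  case (5 x) then show ?case unfolding S_add S_zero by auto
next
  case (6 x)
  then have "(\<lambda>n. \<ominus> x n) \<in> carrier S" unfolding S_mem by (auto intro!: growth_neg)
  moreover have "(\<lambda>n. \<ominus> x n) \<oplus>\<^bsub>S\<^esub> x = \<zero>\<^bsub>S\<^esub>" using 6 unfolding S_add S_zero by (auto simp: l_neg)
  ultimately show ?case by blast
qed

lemma S_lb: "u \<in> carrier S \<Longrightarrow> \<exists>B. lb u B"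
  using S_mem growth_lb by blast

lemma pm_closed: "u \<in> carrier S \<Longrightarrow> v \<in> carrier S \<Longrightarrow> pm u v \<in> carrier S"
proof -
  assume a: "u \<in> carrier S" "v \<in> carrier S"
  obtain A B where "lb u A" "lb v B" using a S_lb by blast
  then show ?thesis using a unfolding S_mem by (auto intro!: pm_growth pm_carrier)
qed

lemma pt_tends_S: "u \<in> carrier S \<Longrightarrow> v \<in> carrier S \<Longrightarrow> j \<le> n \<Longrightarrow> tends (pt u v n j)"
proof -
  assume a: "u \<in> carrier S" "v \<in> carrier S" "j \<le> n"
  obtain A B where "lb u A" "lb v B" using a S_lb by blast
  then show ?thesis using a by (intro pt_tends) auto
qed

lemma pm_ldistr:
  assumes "u \<in> carrier S" "v \<in> carrier S" "t \<in> carrier S"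
  shows "pm (\<lambda>n. u n \<oplus> v n) t = (\<lambda>n. pm u t n \<oplus> pm v t n)"
proof
  fix n
  have "fsum R w (pt (\<lambda>n. u n \<oplus> v n) t n j) = fsum R w (pt u t n j) \<oplus> fsum R w (pt v t n j)" if "j \<le> n" for j
  proof -
    have "pt (\<lambda>n. u n \<oplus> v n) t n j = (\<lambda>i. pt u t n j i \<oplus> pt v t n j i)"
      unfolding pt_def using assms by (auto simp: l_distr)
    then show ?thesis using assms that by (simp add: fsum_add pt_tends_S)
  qed
  then have "pm (\<lambda>n. u n \<oplus> v n) t n = finsum R (\<lambda>j. fsum R w (pt u t n j) \<oplus> fsum R w (pt v t n j)) {..n}"
    unfolding pm_def using S_add_closed[OF assms(1,2)] assms by (intro finsum_cong) (auto intro!: fsum_carrier pt_tends_S)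
  also have "\<dots> = pm u t n \<oplus> pm v t n"
    unfolding pm_def using assms by (intro finsum_addf) (auto intro!: fsum_carrier pt_tends_S)
  finally show "pm (\<lambda>n. u n \<oplus> v n) t n = pm u t n \<oplus> pm v t n" .
qed

lemma pm_rdistr:
  assumes "u \<in> carrier S" "v \<in> carrier S" "t \<in> carrier S"
  shows "pm t (\<lambda>n. u n \<oplus> v n) = (\<lambda>n. pm t u n \<oplus> pm t v n)"
proof
  fix n
  have "fsum R w (pt t (\<lambda>n. u n \<oplus> v n) n j) = fsum R w (pt t u n j) \<oplus> fsum R w (pt t v n j)" if "j \<le> n" for j
  proof -
    have "pt t (\<lambda>n. u n \<oplus> v n) n j = (\<lambda>i. pt t u n j i \<oplus> pt t v n j i)"
      unfolding pt_def using assms by (auto simp: r_distr cf_add)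
    then show ?thesis using assms that by (simp add: fsum_add pt_tends_S)
  qed
  then have "pm t (\<lambda>n. u n \<oplus> v n) n = finsum R (\<lambda>j. fsum R w (pt t u n j) \<oplus> fsum R w (pt t v n j)) {..n}"
    unfolding pm_def using S_add_closed[OF assms(1,2)] assms by (intro finsum_cong) (auto intro!: fsum_carrier pt_tends_S)
  also have "\<dots> = pm t u n \<oplus> pm t v n"
    unfolding pm_def using assms by (intro finsum_addf) (auto intro!: fsum_carrier pt_tends_S)
  finally show "pm t (\<lambda>n. u n \<oplus> v n) n = pm t u n \<oplus> pm t v n" .
qed

lemma finsum_single_at:
  assumes "k \<in> A" "finite A" "x \<in> carrier R"
  shows "finsum R (\<lambda>j. if j = k then x else \<zero>) A = x"
  using add.finprod_singleton_swap[of k A "\<lambda>j. x"] assms by simp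

lemma one_S: "(\<lambda>n. if n = 0 then \<one> else \<zero>) \<in> carrier S"
  unfolding S_mem growth_def by (auto intro!: exI[of _ 1])

lemma pm_one_left:
  assumes "u \<in> carrier S"
  shows "pm (\<lambda>n. if n = 0 then \<one> else \<zero>) u = u"
proof
  fix n
  have "fsum R w (pt (\<lambda>n. if n = 0 then \<one> else \<zero>) u n j) = (if j = n then u n else \<zero>)" if "j \<le> n" for j
  proof -
    have "pt (\<lambda>n. if n = 0 then \<one> else \<zero>) u n j = (\<lambda>i. if i = 0 then (if j = n then u n else \<zero>) else \<zero>)"
      unfolding pt_def using assms that by auto
    then show ?thesis using assms by (simp add: fsum_single)
  qed
  then show "pm (\<lambda>n. if n = 0 then \<one> else \<zero>) u n = u n"
    unfolding pm_def using assms by (simp add: finsum_single_at cong: finsum_cong)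
qed

lemma pm_one_right:
  assumes "u \<in> carrier S"
  shows "pm u (\<lambda>n. if n = 0 then \<one> else \<zero>) = u"
proof
  fix n
  have "fsum R w (pt u (\<lambda>n. if n = 0 then \<one> else \<zero>) n j) = (if j = 0 then u n else \<zero>)" if "j \<le> n" for j
  proof (cases "j = 0")
    case True
    then have "pt u (\<lambda>n. if n = 0 then \<one> else \<zero>) n j = (\<lambda>i. if i = n then u n else \<zero>)"
      unfolding pt_def using assms by (auto simp: cf_one)
    then show ?thesis using assms True by (simp add: fsum_single)
  next
    case False
    then have "pt u (\<lambda>n. if n = 0 then \<one> else \<zero>) n j = (\<lambda>i. \<zero>)"
      unfolding pt_def using assms by auto
    then show ?thesis using False by simp
  qed
  then show "pm u (\<lambda>n. if n = 0 then \<one> else \<zero>) n = u n"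
    unfolding pm_def using assms by (simp add: finsum_single_at cong: finsum_cong)
qed

end

context sk begin

lemma tends_prod:
  assumes "\<And>i. x i \<in> carrier R" "\<And>i. y i \<in> carrier R"
    "\<And>i. ereal (P - real i / 2) \<le> w (x i)" "\<And>i. ereal (Q + real i) \<le> w (y i)"
  shows "tends (\<lambda>i. x i \<otimes> y i)"
  unfolding tends_def
proof
  fix N :: real
  obtain M :: nat where M: "real M \<ge> 2 * (N - P - Q)" by (meson real_arch_simple)
  have "ereal N \<le> w (x i \<otimes> y i)" if "i \<ge> M" for i
  proof -
    have "ereal ((P - real i / 2) + (Q + real i)) \<le> w (x i \<otimes> y i)"
      using assms by (intro w_mult_ge) auto
    moreover have "N \<le> (P - real i / 2) + (Q + real i)" using M of_nat_mono[OF that, where 'a=real]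
      by (simp add: field_simps)
    ultimately show ?thesis by (meson ereal_less_eq(3) order.trans)
  qed
  then show "\<exists>M. \<forall>i\<ge>M. ereal N \<le> w (x i \<otimes> y i)" by blast
qed

lemma w_lower: "x \<in> carrier R \<Longrightarrow> \<exists>Q. ereal Q \<le> w x"
proof -
  assume x: "x \<in> carrier R"
  show ?thesis
  proof (cases "w x")
    case (real r) then show ?thesis by auto
  next
    case PInf then show ?thesis by auto
  next
    case MInf then show ?thesis using x by simp
  qed
qed

lemma cf_bound': "a \<in> carrier R \<Longrightarrow> ereal Q \<le> w a \<Longrightarrow> ereal ((Q - real k) + real i) \<le> w (cf i k a)"
  using cf_bound[of a Q i k] by (simp add: algebra_simps)

lemma mult_cont: "a \<in> carrier R \<Longrightarrow> \<exists>K. \<forall>x B. x \<in> carrier R \<longrightarrow> ereal B \<le> w x \<longrightarrow> ereal (B + K) \<le> w (a \<otimes> x)"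
proof -
  assume a: "a \<in> carrier R"
  show ?thesis
  proof (cases "a = \<zero>")
    case True then show ?thesis by simp
  next
    case False
    then obtain K where K: "w a = ereal K" using w_val[OF a] w_inf[OF a] by blast
    then show ?thesis using a w_mult_ge[of a _ K] by (metis add.commute order_refl)
  qed
qed

lemma lmult_addmap: "a \<in> carrier R \<Longrightarrow> addmap (\<lambda>x. a \<otimes> x)"
  unfolding addmap_def by (simp add: r_distr)

lemma fsum_lmult:
  assumes "a \<in> carrier R" "\<And>i. b i \<in> carrier R" "tends b"
  shows "fsum R w (\<lambda>i. a \<otimes> b i) = a \<otimes> fsum R w b" "tends (\<lambda>i. a \<otimes> b i)"
proof -
  obtain K where K: "\<forall>x B. x \<in> carrier R \<longrightarrow> ereal B \<le> w x \<longrightarrow> ereal (B + K) \<le> w (a \<otimes> x)"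
    using mult_cont[OF assms(1)] by blast
  show "fsum R w (\<lambda>i. a \<otimes> b i) = a \<otimes> fsum R w b" "tends (\<lambda>i. a \<otimes> b i)"
    using fsum_addmap[OF lmult_addmap[OF assms(1)], of K b] K assms by auto
qed

lemma fsum_sig:
  assumes "\<And>i. b i \<in> carrier R" "tends b"
  shows "fsum R w (\<lambda>i. \<sigma> (b i)) = \<sigma> (fsum R w b)" "tends (\<lambda>i. \<sigma> (b i))"
  using fsum_addmap[OF sig_addmap, of 0 b] sig_bound0 assms by auto

lemma fsum_del:
  assumes "\<And>i. b i \<in> carrier R" "tends b"
  shows "fsum R w (\<lambda>i. \<delta> (b i)) = \<delta> (fsum R w b)" "tends (\<lambda>i. \<delta> (b i))"
  using fsum_addmap[OF del_addmap, of 1 b] del_bound assms by auto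

definition cps :: "'a \<Rightarrow> nat \<Rightarrow> 'a" where "cps a = const_ps R a"

lemma cps_S: "a \<in> carrier R \<Longrightarrow> const_ps R a \<in> carrier S"
  unfolding S_mem growth_def const_ps_def by (auto intro!: exI[of _ 1])

lemma pm_const:
  assumes "a \<in> carrier R" "v \<in> carrier S"
  shows "pm (const_ps R a) v = (\<lambda>n. a \<otimes> v n)"
proof
  fix n
  have "fsum R w (pt (const_ps R a) v n j) = (if j = n then a \<otimes> v n else \<zero>)" if "j \<le> n" for j
  proof -
    have "pt (const_ps R a) v n j = (\<lambda>i. if i = 0 then (if j = n then a \<otimes> v n else \<zero>) else \<zero>)"
      unfolding pt_def const_ps_def using assms that by auto
    then show ?thesis using assms by (simp add: fsum_single)
  qed
  then show "pm (const_ps R a) v n = a \<otimes> v n"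
    unfolding pm_def using assms by (simp add: finsum_single_at cong: finsum_cong)
qed

definition assoc_ok :: "(nat \<Rightarrow> 'a) \<Rightarrow> bool" where
  "assoc_ok u \<longleftrightarrow> u \<in> carrier S \<and> (\<forall>v\<in>carrier S. \<forall>t\<in>carrier S. pm (pm u v) t = pm u (pm v t))"

lemma lmult_S: "a \<in> carrier R \<Longrightarrow> v \<in> carrier S \<Longrightarrow> (\<lambda>n. a \<otimes> v n) \<in> carrier S"
  using pm_const[of a v] pm_closed[OF cps_S] by metis

lemma pm_lmult_left:
  assumes "a \<in> carrier R" "v \<in> carrier S" "t \<in> carrier S"
  shows "pm (\<lambda>n. a \<otimes> v n) t = (\<lambda>n. a \<otimes> pm v t n)"
proof
  fix n
  have "fsum R w (pt (\<lambda>n. a \<otimes> v n) t n j) = a \<otimes> fsum R w (pt v t n j)" if "j \<le> n" for j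
  proof -
    have "pt (\<lambda>n. a \<otimes> v n) t n j = (\<lambda>i. a \<otimes> pt v t n j i)" unfolding pt_def using assms by (auto simp: m_assoc)
    then show ?thesis using assms that by (simp add: fsum_lmult pt_tends_S)
  qed
  then have "pm (\<lambda>n. a \<otimes> v n) t n = finsum R (\<lambda>j. a \<otimes> fsum R w (pt v t n j)) {..n}"
    unfolding pm_def using assms lmult_S[OF assms(1,2)] by (intro finsum_cong) (auto intro!: fsum_carrier pt_tends_S)
  also have "\<dots> = a \<otimes> pm v t n"
    unfolding pm_def using assms by (intro finsum_rdistr[symmetric]) (auto intro!: fsum_carrier pt_tends_S)
  finally show "pm (\<lambda>n. a \<otimes> v n) t n = a \<otimes> pm v t n" .
qed

lemma assoc_const: assumes a: "a \<in> carrier R" shows "assoc_ok (const_ps R a)"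
  unfolding assoc_ok_def
proof (intro conjI ballI)
  show "const_ps R a \<in> carrier S" using a by (rule cps_S)
  fix v t assume vt: "v \<in> carrier S" "t \<in> carrier S"
  show "pm (pm (const_ps R a) v) t = pm (const_ps R a) (pm v t)"
    using a vt by (simp add: pm_const pm_lmult_left pm_closed)
qed

definition mono :: "nat \<Rightarrow> nat \<Rightarrow> 'a" where "mono k = (\<lambda>n. if n = k then \<one> else \<zero>)"

lemma mono_S: "mono k \<in> carrier S"
  unfolding S_mem growth_def mono_def by (intro conjI allI exI[of _ "Suc k"]) auto

lemma cf1: "cf 1 k a = (if k = 0 then \<zero> else \<sigma> (if k = 1 then a else \<zero>)) \<oplus> \<delta> (if k = 0 then a else \<zero>)"
  by (simp add: One_nat_def)

lemma pm_X:
  assumes "v \<in> carrier S"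
  shows "pm (mono 1) v = (\<lambda>n. \<delta> (v n) \<oplus> (if n = 0 then \<zero> else \<sigma> (v (n - 1))))"
proof
  fix n
  have e1: "fsum R w (pt (mono 1) v n j) = (if j = n then \<delta> (v n) else \<zero>) \<oplus> (if n \<noteq> 0 \<and> j = n - 1 then \<sigma> (v (n - 1)) else \<zero>)"
    if "j \<le> n" for j
  proof -
    have "pt (mono 1) v n j = (\<lambda>i. if i = 1 then cf 1 (n - j) (v j) else \<zero>)"
      unfolding pt_def mono_def using assms by auto
    then have "fsum R w (pt (mono 1) v n j) = cf 1 (n - j) (v j)" using assms by (simp add: fsum_single)
    also have "\<dots> = (if j = n then \<delta> (v n) else \<zero>) \<oplus> (if n \<noteq> 0 \<and> j = n - 1 then \<sigma> (v (n - 1)) else \<zero>)"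
      unfolding cf1 using assms that by auto
    finally show ?thesis .
  qed
  have "pm (mono 1) v n = finsum R (\<lambda>j. (if j = n then \<delta> (v n) else \<zero>) \<oplus> (if n \<noteq> 0 \<and> j = n - 1 then \<sigma> (v (n - 1)) else \<zero>)) {..n}"
    unfolding pm_def using assms e1 by (intro finsum_cong) auto
  also have "\<dots> = finsum R (\<lambda>j. if j = n then \<delta> (v n) else \<zero>) {..n} \<oplus> finsum R (\<lambda>j. if n \<noteq> 0 \<and> j = n - 1 then \<sigma> (v (n - 1)) else \<zero>) {..n}"
    using assms by (intro finsum_addf) auto
  also have "finsum R (\<lambda>j. if j = n then \<delta> (v n) else \<zero>) {..n} = \<delta> (v n)"
    using assms by (simp add: finsum_single_at)
  also have "finsum R (\<lambda>j. if n \<noteq> 0 \<and> j = n - 1 then \<sigma> (v (n - 1)) else \<zero>) {..n} = (if n = 0 then \<zero> else \<sigma> (v (n - 1)))"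
  proof (cases "n = 0")
    case True then show ?thesis by simp
  next
    case False then show ?thesis using assms finsum_single_at[of "n - 1" "{..n}" "\<sigma> (v (n - 1))"] by simp
  qed
  finally show "pm (mono 1) v n = \<delta> (v n) \<oplus> (if n = 0 then \<zero> else \<sigma> (v (n - 1)))" .
qed

end

context sk begin

lemma lb_del: "(\<And>i. v i \<in> carrier R) \<Longrightarrow> lb v B \<Longrightarrow> ereal (B - real i / 2) \<le> w (\<delta> (v i))"
proof -
  assume a: "\<And>i. v i \<in> carrier R" "lb v B"
  have "ereal (B - real i / 2 + 1) \<le> w (\<delta> (v i))" using a unfolding lb_def by (intro del_bound) auto
  then show ?thesis by (meson ereal_less_eq(3) order.trans le_add_same_cancel1 zero_le_one)
qed

lemma lb_sig: "(\<And>i. v i \<in> carrier R) \<Longrightarrow> lb v B \<Longrightarrow> ereal (B - real i / 2) \<le> w (\<sigma> (v i))"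
  using sig_bound0 unfolding lb_def by blast

lemma lb_shift: "(\<And>i. v i \<in> carrier R) \<Longrightarrow> lb v B \<Longrightarrow>
   ereal (B - real i / 2) \<le> w (if i = 0 then \<zero> else \<sigma> (v (i - 1)))"
proof -
  assume a: "\<And>i. v i \<in> carrier R" "lb v B"
  show ?thesis
  proof (cases i)
    case 0 then show ?thesis by simp
  next
    case (Suc i')
    have h: "ereal (B - real i' / 2) \<le> w (\<sigma> (v i'))" using lb_sig[OF a] .
    have "ereal (B - real i / 2) \<le> ereal (B - real i' / 2)" using Suc by simp
    from order.trans[OF this h] show ?thesis using Suc by simp
  qed
qed

lemma cfb_lower:
  assumes "a \<in> carrier R" "ereal Q \<le> w a"
  shows "ereal ((Q - real k) + real i) \<le> w (cf i k a)"
    "ereal ((Q - real k) + real i) \<le> w (cf (Suc i) k a)"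
    "ereal ((Q - real k) + real i) \<le> w (\<delta> (cf i k a))"
    "ereal ((Q - real k) + real i) \<le> w (if k = 0 then \<zero> else \<sigma> (cf i (k - 1) a))"
proof -
  show a1: "ereal ((Q - real k) + real i) \<le> w (cf i k a)" using cf_bound'[OF assms] .
  have "ereal ((Q - real k) + real (Suc i)) \<le> w (cf (Suc i) k a)" using cf_bound'[OF assms] .
  then show "ereal ((Q - real k) + real i) \<le> w (cf (Suc i) k a)"
    by (meson ereal_less_eq(3) order.trans add_left_mono of_nat_mono le_SucI order_refl)
  have "ereal ((Q - real k) + real i + 1) \<le> w (\<delta> (cf i k a))" using assms a1 by (intro del_bound) auto
  then show "ereal ((Q - real k) + real i) \<le> w (\<delta> (cf i k a))"
    by (meson ereal_less_eq(3) order.trans le_add_same_cancel1 zero_le_one)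
  show "ereal ((Q - real k) + real i) \<le> w (if k = 0 then \<zero> else \<sigma> (cf i (k - 1) a))"
  proof (cases k)
    case 0 then show ?thesis by simp
  next
    case (Suc k')
    have h: "ereal ((Q - real k') + real i) \<le> w (\<sigma> (cf i k' a))" using assms cf_bound'[OF assms] by (intro sig_bound0) auto
    have "ereal ((Q - real k) + real i) \<le> ereal ((Q - real k') + real i)" using Suc by simp
    from order.trans[OF this h] show ?thesis using Suc by simp
  qed
qed

lemma assoc_X: "assoc_ok (mono 1)"
  unfolding assoc_ok_def
proof (intro conjI ballI)
  show "mono 1 \<in> carrier S" by (rule mono_S)
  fix v t assume v: "v \<in> carrier S" and t: "t \<in> carrier S"
  obtain Bv where Bv: "lb v Bv" using S_lb v by blast
  obtain Bt where Bt: "lb t Bt" using S_lb t by blast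
  have vc: "\<And>i. v i \<in> carrier R" and tc: "\<And>i. t i \<in> carrier R" using v t by auto
  have vt: "pm v t \<in> carrier S" using v t by (rule pm_closed)
  let ?s = "\<lambda>i. if i = 0 then \<zero> else \<sigma> (v (i - 1))"
  have Xv: "pm (mono 1) v = (\<lambda>i. \<delta> (v i) \<oplus> ?s i)" using pm_X[OF v] .
  have Xvt: "pm (mono 1) (pm v t) = (\<lambda>n. \<delta> (pm v t n) \<oplus> (if n = 0 then \<zero> else \<sigma> (pm v t (n - 1))))"
    using pm_X[OF vt] .
  show "pm (pm (mono 1) v) t = pm (mono 1) (pm v t)"
  proof
    fix n
    define F1 where "F1 j = fsum R w (\<lambda>i. \<delta> (v i) \<otimes> cf i (n - j) (t j))" for j
    define B1 where "B1 j = fsum R w (\<lambda>i. \<sigma> (v i) \<otimes> (if n - j = 0 then \<zero> else \<sigma> (cf i (n - j - 1) (t j))))" for j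
    define B2 where "B2 j = fsum R w (\<lambda>i. \<sigma> (v i) \<otimes> \<delta> (cf i (n - j) (t j)))" for j
    define H where "H j = fsum R w (\<lambda>i. \<sigma> (v i) \<otimes> \<sigma> (cf i (n - 1 - j) (t j)))" for j
    have Qt: "ereal (Bt - real j / 2) \<le> w (t j)" for j using Bt unfolding lb_def by blast
    have T1: "tends (\<lambda>i. \<delta> (v i) \<otimes> cf i k (t j))" for k j
      by (rule tends_prod[where P = Bv and Q = "(Bt - real j / 2) - real k"]) (use vc tc lb_del[OF vc Bv] cfb_lower[OF tc Qt] in auto)
    have T2: "tends (\<lambda>i. ?s i \<otimes> cf i k (t j))" for k j
      by (rule tends_prod[where P = Bv and Q = "(Bt - real j / 2) - real k"]) (use vc tc lb_shift[OF vc Bv] cfb_lower[OF tc Qt] in auto)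
    have T3: "tends (\<lambda>i. \<sigma> (v i) \<otimes> cf (Suc i) k (t j))" for k j
      by (rule tends_prod[where P = Bv and Q = "(Bt - real j / 2) - real k"]) (use vc tc lb_sig[OF vc Bv] cfb_lower[OF tc Qt] in auto)
    have T4: "tends (\<lambda>i. \<sigma> (v i) \<otimes> (if k = 0 then \<zero> else \<sigma> (cf i (k - 1) (t j))))" for k j
      by (rule tends_prod[where P = Bv and Q = "(Bt - real j / 2) - real k"]) (use vc tc lb_sig[OF vc Bv] cfb_lower[OF tc Qt] in auto)
    have T5: "tends (\<lambda>i. \<sigma> (v i) \<otimes> \<delta> (cf i k (t j)))" for k j
      by (rule tends_prod[where P = Bv and Q = "(Bt - real j / 2) - real k"]) (use vc tc lb_sig[OF vc Bv] cfb_lower[OF tc Qt] in auto)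
    have F: "fsum R w (pt (pm (mono 1) v) t n j) = F1 j \<oplus> (B1 j \<oplus> B2 j)" for j
    proof -
      have "pt (pm (mono 1) v) t n j = (\<lambda>i. \<delta> (v i) \<otimes> cf i (n - j) (t j) \<oplus> ?s i \<otimes> cf i (n - j) (t j))"
        unfolding Xv pt_def using vc tc by (auto simp: l_distr)
      then have "fsum R w (pt (pm (mono 1) v) t n j) = F1 j \<oplus> fsum R w (\<lambda>i. ?s i \<otimes> cf i (n - j) (t j))"
        unfolding F1_def using vc tc T1 T2 by (simp add: fsum_add)
      moreover have "(\<lambda>i. ?s i \<otimes> cf i (n - j) (t j)) = (\<lambda>i. if i = 0 then \<zero> else (\<lambda>i'. \<sigma> (v i') \<otimes> cf (Suc i') (n - j) (t j)) (i - 1))"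
        using vc tc by auto
      moreover have "fsum R w (\<lambda>i. if i = 0 then \<zero> else (\<lambda>i'. \<sigma> (v i') \<otimes> cf (Suc i') (n - j) (t j)) (i - 1))
          = fsum R w (\<lambda>i'. \<sigma> (v i') \<otimes> cf (Suc i') (n - j) (t j))"
      proof -
        have tt: "tends (\<lambda>i'. \<sigma> (v i') \<otimes> cf (Suc i') (n - j) (t j))" by (rule T3)
        have cc: "\<And>i'. \<sigma> (v i') \<otimes> cf (Suc i') (n - j) (t j) \<in> carrier R" using vc tc by (simp del: skw_coef.simps)
        show ?thesis by (rule fsum_shift(1)[OF cc tt])
      qed
      moreover have "(\<lambda>i'. \<sigma> (v i') \<otimes> cf (Suc i') (n - j) (t j)) =
          (\<lambda>i. \<sigma> (v i) \<otimes> (if n - j = 0 then \<zero> else \<sigma> (cf i (n - j - 1) (t j))) \<oplus> \<sigma> (v i) \<otimes> \<delta> (cf i (n - j) (t j)))"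
        using vc tc by (auto simp: r_distr)
      moreover have "fsum R w (\<lambda>i. \<sigma> (v i) \<otimes> (if n - j = 0 then \<zero> else \<sigma> (cf i (n - j - 1) (t j))) \<oplus> \<sigma> (v i) \<otimes> \<delta> (cf i (n - j) (t j)))
          = B1 j \<oplus> B2 j"
        unfolding B1_def B2_def using vc tc T4[of "n - j" j] T5 by (intro fsum_add) (auto simp del: diff_is_0_eq)
      ultimately show ?thesis by simp
    qed
    have G: "\<delta> (fsum R w (pt v t n j)) = F1 j \<oplus> B2 j" if "j \<le> n" for j
    proof -
      have "\<delta> (fsum R w (pt v t n j)) = fsum R w (\<lambda>i. \<delta> (pt v t n j i))"
        using fsum_del(1)[of "pt v t n j"] vc tc pt_tends_S[OF v t that] by simp
      also have "(\<lambda>i. \<delta> (pt v t n j i)) = (\<lambda>i. \<delta> (v i) \<otimes> cf i (n - j) (t j) \<oplus> \<sigma> (v i) \<otimes> \<delta> (cf i (n - j) (t j)))"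
        unfolding pt_def using vc tc by (auto simp: del_mult)
      also have "fsum R w \<dots> = F1 j \<oplus> B2 j"
        unfolding F1_def B2_def using vc tc T1 T5 by (intro fsum_add) auto
      finally show ?thesis .
    qed
    have Hs: "\<sigma> (fsum R w (pt v t (n - 1) j)) = H j" if "j \<le> n - 1" for j
    proof -
      have "\<sigma> (fsum R w (pt v t (n - 1) j)) = fsum R w (\<lambda>i. \<sigma> (pt v t (n - 1) j i))"
        using fsum_sig(1)[of "pt v t (n - 1) j"] vc tc pt_tends_S[OF v t that] by simp
      also have "(\<lambda>i. \<sigma> (pt v t (n - 1) j i)) = (\<lambda>i. \<sigma> (v i) \<otimes> \<sigma> (cf i (n - 1 - j) (t j)))"
        unfolding pt_def using vc tc by (auto simp: sig_mult)
      finally show ?thesis unfolding H_def .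
    qed
    have B1n: "B1 n = \<zero>" unfolding B1_def using vc by simp
    have B1j: "B1 j = H j" if "j < n" for j
    proof -
      have "n - j \<noteq> 0" "n - j - 1 = n - 1 - j" using that by auto
      then show ?thesis unfolding B1_def H_def by simp
    qed
    have cF1: "F1 j \<in> carrier R" for j unfolding F1_def using T1 vc tc by (intro fsum_carrier) auto
    have cB1: "B1 j \<in> carrier R" for j unfolding B1_def using T4[of "n - j" j] vc tc by (intro fsum_carrier) (auto simp del: diff_is_0_eq)
    have cB2: "B2 j \<in> carrier R" for j unfolding B2_def using T5 vc tc by (intro fsum_carrier) auto
    have cH: "H j \<in> carrier R" for j unfolding H_def using vc tc
    proof (intro fsum_carrier)
      show "tends (\<lambda>i. \<sigma> (v i) \<otimes> \<sigma> (cf i (n - 1 - j) (t j)))"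
        using T4[of "Suc (n - 1 - j)" j] by simp
    qed auto
    have sumB1: "finsum R B1 {..n} = (if n = 0 then \<zero> else finsum R H {..n - 1})"
    proof (cases n)
      case 0 then show ?thesis using B1n by simp
    next
      case (Suc m)
      then have "{..n} = insert n {..m}" by auto
      then have "finsum R B1 {..n} = B1 n \<oplus> finsum R B1 {..m}" using cB1 Suc by (simp add: finsum_insert)
      also have "finsum R B1 {..m} = finsum R H {..m}" using B1j Suc cH by (intro finsum_cong) auto
      finally show ?thesis using B1n Suc cH by (simp add: finsum_closed Pi_def)
    qed
    have L: "pm (pm (mono 1) v) t n = finsum R F1 {..n} \<oplus> (finsum R B1 {..n} \<oplus> finsum R B2 {..n})"
    proof -
      have "pm (pm (mono 1) v) t n = finsum R (\<lambda>j. F1 j \<oplus> (B1 j \<oplus> B2 j)) {..n}"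
      proof -
        have "(\<lambda>j. fsum R w (pt (pm (mono 1) v) t n j)) = (\<lambda>j. F1 j \<oplus> (B1 j \<oplus> B2 j))" using F by (rule ext)
        then show ?thesis unfolding pm_def[of "pm (mono 1) v" t] by simp
      qed
      also have "\<dots> = finsum R F1 {..n} \<oplus> finsum R (\<lambda>j. B1 j \<oplus> B2 j) {..n}"
        using cF1 cB1 cB2 by (intro finsum_addf) auto
      also have "finsum R (\<lambda>j. B1 j \<oplus> B2 j) {..n} = finsum R B1 {..n} \<oplus> finsum R B2 {..n}"
        using cB1 cB2 by (intro finsum_addf) auto
      finally show ?thesis .
    qed
    have D: "\<delta> (pm v t n) = finsum R F1 {..n} \<oplus> finsum R B2 {..n}"
    proof -
      have "\<delta> (pm v t n) = finsum R (\<lambda>j. \<delta> (fsum R w (pt v t n j))) {..n}"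
        unfolding pm_def using vc tc by (intro addmap_finsum del_addmap) (auto intro!: fsum_carrier pt_tends_S v t)
      also have "\<dots> = finsum R (\<lambda>j. F1 j \<oplus> B2 j) {..n}"
        using G cF1 cB2 by (intro finsum_cong) auto
      also have "\<dots> = finsum R F1 {..n} \<oplus> finsum R B2 {..n}"
        using cF1 cB2 by (intro finsum_addf) auto
      finally show ?thesis .
    qed
    have Sg: "(if n = 0 then \<zero> else \<sigma> (pm v t (n - 1))) = finsum R B1 {..n}"
    proof (cases "n = 0")
      case True then show ?thesis using sumB1 by simp
    next
      case False
      have "\<sigma> (pm v t (n - 1)) = finsum R (\<lambda>j. \<sigma> (fsum R w (pt v t (n - 1) j))) {..n - 1}"
        unfolding pm_def using vc tc by (intro addmap_finsum sig_addmap) (auto intro!: fsum_carrier pt_tends_S v t)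
      also have "\<dots> = finsum R H {..n - 1}"
        using Hs cH by (intro finsum_cong) auto
      finally show ?thesis using sumB1 False by simp
    qed
    have c3: "finsum R F1 {..n} \<in> carrier R" "finsum R B1 {..n} \<in> carrier R" "finsum R B2 {..n} \<in> carrier R"
      using cF1 cB1 cB2 by (auto intro!: finsum_closed)
    show "pm (pm (mono 1) v) t n = pm (mono 1) (pm v t) n"
      unfolding L Xvt using D Sg c3 by (simp add: a_ac)
  qed
qed

end

context sk begin

lemma assoc_add:
  assumes "assoc_ok u" "assoc_ok u'"
  shows "assoc_ok (\<lambda>n. u n \<oplus> u' n)"
  unfolding assoc_ok_def
proof (intro conjI ballI)
  have u: "u \<in> carrier S" "u' \<in> carrier S" using assms unfolding assoc_ok_def by auto
  then show "(\<lambda>n. u n \<oplus> u' n) \<in> carrier S" by (rule S_add_closed)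
  fix v t assume vt: "v \<in> carrier S" "t \<in> carrier S"
  have "pm (pm (\<lambda>n. u n \<oplus> u' n) v) t = pm (\<lambda>n. pm u v n \<oplus> pm u' v n) t" using u vt by (simp add: pm_ldistr)
  also have "\<dots> = (\<lambda>n. pm (pm u v) t n \<oplus> pm (pm u' v) t n)" using u vt by (simp add: pm_ldistr pm_closed)
  also have "\<dots> = (\<lambda>n. pm u (pm v t) n \<oplus> pm u' (pm v t) n)" using assms vt unfolding assoc_ok_def by simp
  also have "\<dots> = pm (\<lambda>n. u n \<oplus> u' n) (pm v t)" using u vt by (simp add: pm_ldistr pm_closed)
  finally show "pm (pm (\<lambda>n. u n \<oplus> u' n) v) t = pm (\<lambda>n. u n \<oplus> u' n) (pm v t)" .
qed

lemma assoc_mult: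
  assumes "assoc_ok u" "assoc_ok u'"
  shows "assoc_ok (pm u u')"
  unfolding assoc_ok_def
proof (intro conjI ballI)
  have u: "u \<in> carrier S" "u' \<in> carrier S" using assms unfolding assoc_ok_def by auto
  then show "pm u u' \<in> carrier S" by (rule pm_closed)
  fix v t assume vt: "v \<in> carrier S" "t \<in> carrier S"
  have "pm (pm (pm u u') v) t = pm (pm u (pm u' v)) t" using assms u vt unfolding assoc_ok_def by simp
  also have "\<dots> = pm u (pm (pm u' v) t)" using assms u vt unfolding assoc_ok_def by (simp add: pm_closed)
  also have "\<dots> = pm u (pm u' (pm v t))" using assms u vt unfolding assoc_ok_def by (simp add: pm_closed)
  also have "\<dots> = pm (pm u u') (pm v t)" using assms u vt unfolding assoc_ok_def by (simp add: pm_closed)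
  finally show "pm (pm (pm u u') v) t = pm (pm u u') (pm v t)" .
qed

lemma assoc_one: "assoc_ok (\<lambda>n. if n = 0 then \<one> else \<zero>)"
  unfolding assoc_ok_def using one_S by (simp add: pm_one_left pm_closed)

lemma mono_0: "mono 0 = (\<lambda>n. if n = 0 then \<one> else \<zero>)" unfolding mono_def by simp

lemma mono_Suc: "mono (Suc k) = pm (mono 1) (mono k)"
  unfolding pm_X[OF mono_S] by (rule ext) (auto simp: mono_def)

lemma assoc_mono: "assoc_ok (mono k)"
proof (induction k)
  case 0 then show ?case unfolding mono_0 by (rule assoc_one)
next
  case (Suc k) then show ?case unfolding mono_Suc by (intro assoc_mult assoc_X)
qed

definition trunc :: "nat \<Rightarrow> (nat \<Rightarrow> 'a) \<Rightarrow> nat \<Rightarrow> 'a" where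
  "trunc N u = (\<lambda>n. if n < N then u n else \<zero>)"

lemma assoc_trunc: "u \<in> carrier S \<Longrightarrow> assoc_ok (trunc N u)"
proof (induction N)
  case 0
  have "trunc 0 u = const_ps R \<zero>" unfolding trunc_def const_ps_def by auto
  then show ?case by (simp add: assoc_const)
next
  case (Suc N)
  have "trunc (Suc N) u = (\<lambda>n. trunc N u n \<oplus> pm (const_ps R (u N)) (mono N) n)"
  proof -
    have "pm (const_ps R (u N)) (mono N) = (\<lambda>n. u N \<otimes> mono N n)"
      using Suc.prems mono_S by (intro pm_const) auto
    moreover have "(if n < Suc N then u n else \<zero>) = (if n < N then u n else \<zero>) \<oplus> u N \<otimes> (if n = N then \<one> else \<zero>)" for n
      using Suc.prems S_val[OF Suc.prems] by (cases "n < N"; cases "n = N") auto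
    ultimately show ?thesis unfolding trunc_def mono_def by auto
  qed
  then show ?case using Suc by (simp add: assoc_add assoc_mult assoc_const assoc_mono)
qed

lemma assoc_all:
  assumes u: "u \<in> carrier S"
  shows "assoc_ok u"
  unfolding assoc_ok_def
proof (intro conjI ballI)
  show "u \<in> carrier S" by fact
  fix v t assume v: "v \<in> carrier S" and t: "t \<in> carrier S"
  obtain Bv where Bv: "lb v Bv" using S_lb v by blast
  obtain Bt where Bt: "lb t Bt" using S_lb t by blast
  have vt: "pm v t \<in> carrier S" using v t by (rule pm_closed)
  obtain Bvt where Bvt: "lb (pm v t) Bvt" using S_lb vt by blast
  show "pm (pm u v) t = pm u (pm v t)"
  proof
    fix n
    let ?L = "pm (pm u v) t n" and ?R = "pm u (pm v t) n"
    have Lc: "?L \<in> carrier R" "?R \<in> carrier R" using u v t vt by (auto intro!: S_val pm_closed)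
    have "ereal Y \<le> w (?L \<ominus> ?R)" for Y
    proof -
      define A where "A = Y + \<bar>Bv + Bt\<bar> + \<bar>Bvt\<bar> + real n / 2"
      obtain M where M: "\<forall>n\<ge>M. ereal (A - real n / 2) \<le> w (u n)" using u unfolding S_mem growth_def by blast
      define d where "d = (\<lambda>n. if n < M then \<zero> else u n)"
      have dle: "w (u n) \<le> w (d n)" for n unfolding d_def by simp
      have dS: "d \<in> carrier S" unfolding S_mem
      proof
        show "\<forall>n. d n \<in> carrier R" unfolding d_def using u by simp
        show "growth d" using u dle unfolding S_mem growth_def by (meson order.trans)
      qed
      have dlb: "lb d A" unfolding lb_def d_def using M by simp
      have TS: "trunc M u \<in> carrier S" using assoc_trunc[OF u] unfolding assoc_ok_def by blast
      have ud: "u = (\<lambda>n. d n \<oplus> trunc M u n)" unfolding d_def trunc_def using u by auto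
      have T: "pm (pm (trunc M u) v) t = pm (trunc M u) (pm v t)"
        using assoc_trunc[OF u] v t unfolding assoc_ok_def by blast
      have eL: "?L = pm (pm d v) t n \<oplus> pm (pm (trunc M u) v) t n"
        by (subst ud, simp only: pm_ldistr[OF dS TS v] pm_ldistr[OF pm_closed[OF dS v] pm_closed[OF TS v] t])
      have eR: "?R = pm d (pm v t) n \<oplus> pm (trunc M u) (pm v t) n"
        by (subst ud, simp only: pm_ldistr[OF dS TS vt])
      have c: "pm (pm d v) t n \<in> carrier R" "pm d (pm v t) n \<in> carrier R" "pm (trunc M u) (pm v t) n \<in> carrier R"
        using dS TS v t vt by (auto intro!: S_val pm_closed)
      have diff: "?L \<ominus> ?R = pm (pm d v) t n \<ominus> pm d (pm v t) n"
        unfolding eL eR T using c by algebra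
      have l1: "lb (pm (pm d v) t) (A + Bv + Bt)"
        using dS v t dlb Bv Bt by (intro pm_lb) (auto intro!: S_val pm_closed)
      have l2: "lb (pm d (pm v t)) (A + Bvt)"
        using dS vt dlb Bvt by (intro pm_lb) (auto intro!: S_val pm_closed)
      have "ereal Y \<le> w (pm (pm d v) t n)"
      proof -
        have "ereal (A + Bv + Bt - real n / 2) \<le> w (pm (pm d v) t n)" using l1 unfolding lb_def by blast
        moreover have "Y \<le> A + Bv + Bt - real n / 2" unfolding A_def by linarith
        ultimately show ?thesis by (meson ereal_less_eq(3) order.trans)
      qed
      moreover have "ereal Y \<le> w (pm d (pm v t) n)"
      proof -
        have "ereal (A + Bvt - real n / 2) \<le> w (pm d (pm v t) n)" using l2 unfolding lb_def by blast
        moreover have "Y \<le> A + Bvt - real n / 2" unfolding A_def by linarith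
        ultimately show ?thesis by (meson ereal_less_eq(3) order.trans)
      qed
      ultimately show ?thesis unfolding diff using c by (intro w_minus_ge) auto
    qed
    then have "?L \<ominus> ?R = \<zero>" using Lc by (intro w_big) auto
    then show "?L = ?R" using Lc by (metis minus_equality r_neg1 a_minus_def add.inv_closed minus_minus
        add.inv_solve_right' l_zero)
  qed
qed

lemma S_ring: "ring S"
proof (rule ringI)
  show "abelian_group S" by (rule S_abelian)
  show "monoid S"
  proof (rule monoidI)
    show "\<And>x y. x \<in> carrier S \<Longrightarrow> y \<in> carrier S \<Longrightarrow> x \<otimes>\<^bsub>S\<^esub> y \<in> carrier S"
      unfolding S_mult by (rule pm_closed)
    show "\<one>\<^bsub>S\<^esub> \<in> carrier S" unfolding S_one by (rule one_S)
    show "\<And>x y z. x \<in> carrier S \<Longrightarrow> y \<in> carrier S \<Longrightarrow> z \<in> carrier S \<Longrightarrow>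
      x \<otimes>\<^bsub>S\<^esub> y \<otimes>\<^bsub>S\<^esub> z = x \<otimes>\<^bsub>S\<^esub> (y \<otimes>\<^bsub>S\<^esub> z)"
      unfolding S_mult using assoc_all unfolding assoc_ok_def by blast
    show "\<And>x. x \<in> carrier S \<Longrightarrow> \<one>\<^bsub>S\<^esub> \<otimes>\<^bsub>S\<^esub> x = x"
      unfolding S_mult S_one by (rule pm_one_left)
    show "\<And>x. x \<in> carrier S \<Longrightarrow> x \<otimes>\<^bsub>S\<^esub> \<one>\<^bsub>S\<^esub> = x"
      unfolding S_mult S_one by (rule pm_one_right)
  qed
  show "\<And>x y z. x \<in> carrier S \<Longrightarrow> y \<in> carrier S \<Longrightarrow> z \<in> carrier S \<Longrightarrow>
      (x \<oplus>\<^bsub>S\<^esub> y) \<otimes>\<^bsub>S\<^esub> z = x \<otimes>\<^bsub>S\<^esub> z \<oplus>\<^bsub>S\<^esub> y \<otimes>\<^bsub>S\<^esub> z"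
    unfolding S_mult S_add by (rule pm_ldistr)
  show "\<And>x y z. x \<in> carrier S \<Longrightarrow> y \<in> carrier S \<Longrightarrow> z \<in> carrier S \<Longrightarrow>
      z \<otimes>\<^bsub>S\<^esub> (x \<oplus>\<^bsub>S\<^esub> y) = z \<otimes>\<^bsub>S\<^esub> x \<oplus>\<^bsub>S\<^esub> z \<otimes>\<^bsub>S\<^esub> y"
    unfolding S_mult S_add by (rule pm_rdistr)
qed

end

locale skI = sk +
  fixes I :: "'a set"
  assumes idl: "ideal I R" and Icl: "fclosed R w I" and sigI: "\<sigma> ` I \<subseteq> I" and delI: "\<delta> ` I \<subseteq> I"
begin

abbreviation Q where "Q \<equiv> R Quot I"
abbreviation pr where "pr x \<equiv> I +> x"

lemma Isub: "additive_subgroup I R" by (rule ideal.axioms(1)[OF idl])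
lemma Iabs: "abelian_subgroup I R" using abelian_subgroupI3[OF Isub is_abelian_group] .
lemma I_carrier: "x \<in> I \<Longrightarrow> x \<in> carrier R" using additive_subgroup.a_subset[OF Isub] by blast
lemma I_add: "x \<in> I \<Longrightarrow> y \<in> I \<Longrightarrow> x \<oplus> y \<in> I" by (rule additive_subgroup.a_closed[OF Isub])
lemma I_neg: "x \<in> I \<Longrightarrow> \<ominus> x \<in> I" by (rule additive_subgroup.a_inv_closed[OF Isub])
lemma I_minus: "x \<in> I \<Longrightarrow> y \<in> I \<Longrightarrow> x \<ominus> y \<in> I" unfolding a_minus_def by (intro I_add I_neg)
lemma I_zero: "\<zero> \<in> I" by (rule additive_subgroup.zero_closed[OF Isub])
lemma I_lmult: "x \<in> carrier R \<Longrightarrow> y \<in> I \<Longrightarrow> x \<otimes> y \<in> I" by (rule ideal.I_l_closed[OF idl])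
lemma I_rmult: "x \<in> carrier R \<Longrightarrow> y \<in> I \<Longrightarrow> y \<otimes> x \<in> I" by (rule ideal.I_r_closed[OF idl])
lemma I_sig: "x \<in> I \<Longrightarrow> \<sigma> x \<in> I" using sigI by blast
lemma I_del: "x \<in> I \<Longrightarrow> \<delta> x \<in> I" using delI by blast

lemma Q_ring: "ring Q" by (rule ideal.quotient_is_ring[OF idl])
lemma pr_hom: "pr \<in> ring_hom R Q" by (rule ideal.rcos_ring_hom[OF idl])
lemma pr_add: "x \<in> carrier R \<Longrightarrow> y \<in> carrier R \<Longrightarrow> pr (x \<oplus> y) = pr x \<oplus>\<^bsub>Q\<^esub> pr y"
  by (rule ring_hom_add[OF pr_hom])
lemma pr_mult: "x \<in> carrier R \<Longrightarrow> y \<in> carrier R \<Longrightarrow> pr (x \<otimes> y) = pr x \<otimes>\<^bsub>Q\<^esub> pr y"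
  by (rule ring_hom_mult[OF pr_hom])
lemma pr_one: "pr \<one> = \<one>\<^bsub>Q\<^esub>" by (rule ring_hom_one[OF pr_hom])
lemma pr_carrier: "x \<in> carrier R \<Longrightarrow> pr x \<in> carrier Q" by (rule ring_hom_closed[OF pr_hom])
lemma Q_zero: "\<zero>\<^bsub>Q\<^esub> = I" unfolding FactRing_def by simp
lemma pr_I: "x \<in> I \<Longrightarrow> pr x = I" by (rule a_rcos_zero[OF idl])
lemma pr_zero: "pr \<zero> = \<zero>\<^bsub>Q\<^esub>" using pr_I[OF I_zero] Q_zero by simp

lemma Q_carrier: "C \<in> carrier Q \<longleftrightarrow> (\<exists>x\<in>carrier R. C = pr x)"
  unfolding FactRing_def A_RCOSETS_def' by auto

lemma Q_cases: "C \<in> carrier Q \<Longrightarrow> (\<And>x. x \<in> carrier R \<Longrightarrow> C = pr x \<Longrightarrow> P) \<Longrightarrow> P"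
  using Q_carrier by blast

lemma coset_mem: "x \<in> carrier R \<Longrightarrow> z \<in> pr x \<longleftrightarrow> (\<exists>i\<in>I. z = i \<oplus> x)"
  unfolding a_r_coset_def' by auto

lemma pr_neg: "x \<in> carrier R \<Longrightarrow> pr (\<ominus> x) = \<ominus>\<^bsub>Q\<^esub> pr x"
proof -
  assume x: "x \<in> carrier R"
  have "pr (\<ominus> x) \<oplus>\<^bsub>Q\<^esub> pr x = \<zero>\<^bsub>Q\<^esub>" using x by (simp add: pr_add[symmetric] l_neg pr_zero)
  then show ?thesis using x pr_carrier ring.ring_simprules(16)[OF Q_ring] abelian_group.minus_equality
    by (metis Q_ring add.inv_closed ring.is_abelian_group)
qed

lemma pr_minus: "x \<in> carrier R \<Longrightarrow> y \<in> carrier R \<Longrightarrow> pr (x \<ominus> y) = pr x \<ominus>\<^bsub>Q\<^esub> pr y"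
  unfolding a_minus_def by (simp add: pr_add pr_neg)

lemma pr_eq_iff: "x \<in> carrier R \<Longrightarrow> y \<in> carrier R \<Longrightarrow> pr x = pr y \<longleftrightarrow> x \<ominus> y \<in> I"
proof
  assume xy: "x \<in> carrier R" "y \<in> carrier R" and e: "pr x = pr y"
  have "x \<in> pr y" using e abelian_subgroup.a_rcos_self[OF Iabs xy(1)] by simp
  then show "x \<ominus> y \<in> I" using abelian_subgroup.a_rcos_module_minus[OF Iabs ring_axioms xy(2,1)] by simp
next
  assume xy: "x \<in> carrier R" "y \<in> carrier R" and m: "x \<ominus> y \<in> I"
  have "x \<in> pr y" using abelian_subgroup.a_rcos_module_minus[OF Iabs ring_axioms xy(2,1)] m by simp
  then show "pr x = pr y" using abelian_subgroup.a_repr_independence'[OF Iabs _ xy(2)] by simp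
qed

lemma pr_eq_zero: "x \<in> carrier R \<Longrightarrow> pr x = I \<longleftrightarrow> x \<in> I"
  using pr_eq_iff[of x \<zero>] pr_I[OF I_zero] by (simp add: a_minus_def)

lemma quot_map_pr:
  assumes f: "addmap f" "f ` I \<subseteq> I" and x: "x \<in> carrier R"
  shows "quot_map R I f (pr x) = pr (f x)"
proof -
  have ne: "\<exists>r. r \<in> pr x" using abelian_subgroup.a_rcos_self[OF Iabs x] by blast
  define s where "s = (SOME r. r \<in> pr x)"
  have "s \<in> pr x" unfolding s_def using ne by (rule someI_ex)
  then obtain i where i: "i \<in> I" "s = i \<oplus> x" using coset_mem[OF x] by blast
  have fi: "f i \<in> I" using f(2) i(1) by blast
  have "f s = f i \<oplus> f x" using f(1) i I_carrier x unfolding addmap_def by blast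
  moreover have "f x \<in> carrier R" using f(1) x unfolding addmap_def by blast
  ultimately have "pr (f s) = pr (f x)" using fi I_carrier
    by (subst pr_eq_iff) (auto simp: a_minus_def a_assoc r_neg)
  then show ?thesis unfolding quot_map_def s_def by simp
qed

lemma sig_minus_addmap: "addmap (\<lambda>x. \<sigma> x \<ominus> x)"
  unfolding addmap_def using sig_add
  by (auto simp: a_minus_def minus_add a_ac)

lemma qm_sig: "x \<in> carrier R \<Longrightarrow> quot_map R I \<sigma> (pr x) = pr (\<sigma> x)"
  using quot_map_pr[OF sig_addmap sigI] .
lemma qm_del: "x \<in> carrier R \<Longrightarrow> quot_map R I \<delta> (pr x) = pr (\<delta> x)"
  using quot_map_pr[OF del_addmap delI] .

end

context skI begin

abbreviation qf where "qf x \<equiv> quot_filt w (pr x)"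

lemma qf_mem: "z \<in> pr x \<Longrightarrow> w z \<le> quot_filt w (pr x)"
  unfolding quot_filt_def by (rule Sup_upper) simp

lemma qf_ge: "x \<in> carrier R \<Longrightarrow> w x \<le> qf x"
  using qf_mem abelian_subgroup.a_rcos_self[OF Iabs] by blast

lemma qf_gt: "ereal B < quot_filt w (pr x) \<Longrightarrow> \<exists>z\<in>pr x. ereal B < w z"
  unfolding quot_filt_def by (simp add: less_Sup_iff)

lemma qf_notminf: "x \<in> carrier R \<Longrightarrow> qf x \<noteq> -\<infinity>"
  using qf_ge[of x] w_not_minf[of x] by (metis ereal_infty_less_eq2(2))

lemma qf_inf: assumes x: "x \<in> carrier R" and i: "qf x = \<infinity>" shows "x \<in> I"
proof -
  have "\<forall>n::nat. \<exists>z\<in>pr x. ereal (real n) < w z" using i qf_gt by simp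
  then obtain z where z: "\<And>n. z n \<in> pr x" "\<And>n. ereal (real n) < w (z n)" by metis
  have "\<forall>n. \<exists>i\<in>I. z n = i \<oplus> x" using z(1) coset_mem[OF x] by blast
  then obtain a where a: "\<And>n. a n \<in> I" "\<And>n. z n = a n \<oplus> x" by metis
  have f1: "fconv R w (\<lambda>n. \<ominus> a n) x" unfolding fconv_def
  proof (intro conjI allI)
    show "x \<in> carrier R" by fact
    fix N :: real
    obtain M :: nat where M: "N \<le> real M" using real_arch_simple by blast
    have "ereal N \<le> w (\<ominus> a n \<ominus> x)" if "n \<ge> M" for n
    proof -
      have "\<ominus> a n \<ominus> x = \<ominus> (z n)" using a x I_carrier[OF a(1)] by (simp add: a_minus_def minus_add)
      then have "w (\<ominus> a n \<ominus> x) = w (z n)" using a x I_carrier[OF a(1)] by simp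
      moreover have "ereal N \<le> ereal (real n)" using M that by simp
      moreover have "ereal (real n) \<le> w (z n)" using z(2)[of n] by (rule less_imp_le)
      ultimately show ?thesis by (metis order.trans)
    qed
    then show "\<exists>M. \<forall>n\<ge>M. ereal N \<le> w (\<ominus> a n \<ominus> x)" by blast
  qed
  have f2: "\<And>n. \<ominus> a n \<in> I" using a I_neg by blast
  have "\<forall>a L. (\<forall>n. a n \<in> I) \<longrightarrow> fconv R w a L \<longrightarrow> L \<in> I" using Icl unfolding fclosed_def .
  from this[rule_format, OF f2 f1] show ?thesis .
qed

lemma ereal_step:
  assumes "c \<noteq> -\<infinity>" "\<And>B. ereal B < c \<Longrightarrow> ereal (B + 1) \<le> e"
  shows "c + 1 \<le> e"
proof (cases c)
  case (real r)
  show ?thesis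
  proof (cases e)
    case (real s)
    have "r + 1 \<le> s + \<epsilon>" if "\<epsilon> > 0" for \<epsilon>
      using assms(2)[of "r - \<epsilon>"] real \<open>c = ereal r\<close> that by simp
    then have "r + 1 \<le> s" by (rule field_le_epsilon)
    then show ?thesis using real \<open>c = ereal r\<close> by simp
  next
    case PInf then show ?thesis by simp
  next
    case MInf then show ?thesis using assms(2)[of "r - 1"] real by simp
  qed
next
  case PInf
  then have "ereal (B + 1) \<le> e" for B using assms(2) by simp
  then have "ereal B \<le> e" for B using \<open>\<And>B. ereal (B + 1) \<le> e\<close>[of "B - 1"] by simp
  then have "e = \<infinity>" by (rule ereal_top_le)
  then show ?thesis by simp
next
  case MInf then show ?thesis using assms by simp
qed

lemma qf_step:
  assumes d: "addmap d" "d ` I \<subseteq> I" "\<And>z B. z \<in> carrier R \<Longrightarrow> ereal B \<le> w z \<Longrightarrow> ereal (B + 1) \<le> w (d z)"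
    and x: "x \<in> carrier R"
  shows "qf x + 1 \<le> qf (d x)"
proof (rule ereal_step[OF qf_notminf[OF x]])
  fix B assume "ereal B < qf x"
  then obtain z where z: "z \<in> pr x" "ereal B < w z" using qf_gt by blast
  then obtain i where i: "i \<in> I" "z = i \<oplus> x" using coset_mem[OF x] by blast
  have zc: "z \<in> carrier R" using i x I_carrier by simp
  have "d z = d i \<oplus> d x" using d(1) i x I_carrier unfolding addmap_def by blast
  moreover have "d i \<in> I" using d(2) i by blast
  moreover have "d x \<in> carrier R" using d(1) x unfolding addmap_def by blast
  ultimately have "d z \<in> pr (d x)" using coset_mem by blast
  then have "w (d z) \<le> qf (d x)" by (rule qf_mem)
  moreover have "ereal (B + 1) \<le> w (d z)" using d(3)[OF zc] z(2) by simp
  ultimately show "ereal (B + 1) \<le> qf (d x)" by simp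
qed

lemma sig_inv_I:
  assumes x: "x \<in> carrier R" and sx: "\<sigma> x \<in> I"
  shows "x \<in> I"
proof -
  have "qf x + 1 \<le> qf x"
  proof (rule ereal_step[OF qf_notminf[OF x]])
    fix B assume "ereal B < qf x"
    then obtain z where z: "z \<in> pr x" "ereal B < w z" using qf_gt by blast
    then obtain i where i: "i \<in> I" "z = i \<oplus> x" using coset_mem[OF x] by blast
    have ic: "i \<in> carrier R" using i I_carrier by simp
    have zc: "z \<in> carrier R" using i x I_carrier by simp
    have "ereal (B + 1) \<le> w (\<sigma> z \<ominus> z)" using sig_bound[OF zc] z(2) by simp
    moreover have "w (\<sigma> z \<ominus> z) = w (z \<ominus> \<sigma> z)" using zc by (simp add: w_minus_sym)
    moreover have "z \<ominus> \<sigma> z \<in> pr x"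
    proof -
      have si: "\<sigma> i \<in> carrier R" "\<sigma> x \<in> carrier R" using ic x by auto
      have "\<sigma> z = \<sigma> i \<oplus> \<sigma> x" using i ic x by (simp add: sig_add)
      then have "z \<ominus> \<sigma> z = (i \<ominus> \<sigma> i \<ominus> \<sigma> x) \<oplus> x" unfolding i(2) using ic x si by algebra
      moreover have "i \<ominus> \<sigma> i \<ominus> \<sigma> x \<in> I" using i sx I_sig by (intro I_minus) auto
      ultimately show ?thesis using coset_mem[OF x] by blast
    qed
    then have "w (z \<ominus> \<sigma> z) \<le> qf x" by (rule qf_mem)
    ultimately show "ereal (B + 1) \<le> qf x" by simp
  qed
  then have "qf x = \<infinity>" using qf_notminf[OF x] by (cases "qf x") auto
  then show ?thesis using qf_inf x by blast
qed

end

context skI begin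

abbreviation sq where "sq \<equiv> quot_map R I \<sigma>"
abbreviation dq where "dq \<equiv> quot_map R I \<delta>"

lemma Q_mult_pr: "x \<in> carrier R \<Longrightarrow> y \<in> carrier R \<Longrightarrow> pr x \<otimes>\<^bsub>Q\<^esub> pr y = pr (x \<otimes> y)"
  by (simp add: pr_mult)
lemma Q_add_pr: "x \<in> carrier R \<Longrightarrow> y \<in> carrier R \<Longrightarrow> pr x \<oplus>\<^bsub>Q\<^esub> pr y = pr (x \<oplus> y)"
  by (simp add: pr_add)

lemma sq_hom: "sq \<in> ring_hom Q Q"
proof (rule ring_hom_memI)
  fix C assume "C \<in> carrier Q"
  then obtain x where "x \<in> carrier R" "C = pr x" using Q_carrier by blast
  then show "sq C \<in> carrier Q" by (simp add: qm_sig pr_carrier)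
next
  fix C D assume "C \<in> carrier Q" "D \<in> carrier Q"
  then obtain x y where xy: "x \<in> carrier R" "C = pr x" "y \<in> carrier R" "D = pr y" using Q_carrier by metis
  show "sq (C \<otimes>\<^bsub>Q\<^esub> D) = sq C \<otimes>\<^bsub>Q\<^esub> sq D" using xy by (simp add: Q_mult_pr qm_sig sig_mult)
  show "sq (C \<oplus>\<^bsub>Q\<^esub> D) = sq C \<oplus>\<^bsub>Q\<^esub> sq D" using xy by (simp add: Q_add_pr qm_sig sig_add)
next
  show "sq \<one>\<^bsub>Q\<^esub> = \<one>\<^bsub>Q\<^esub>" using qm_sig[of \<one>] by (simp add: pr_one[symmetric])
qed

lemma sq_bij: "bij_betw sq (carrier Q) (carrier Q)"
  unfolding bij_betw_def
proof
  show "inj_on sq (carrier Q)"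
  proof (rule inj_onI)
    fix C D assume "C \<in> carrier Q" "D \<in> carrier Q" and e: "sq C = sq D"
    then obtain x y where xy: "x \<in> carrier R" "C = pr x" "y \<in> carrier R" "D = pr y" using Q_carrier by metis
    have "pr (\<sigma> x) = pr (\<sigma> y)" using e xy by (simp add: qm_sig)
    then have "\<sigma> x \<ominus> \<sigma> y \<in> I" using xy by (simp add: pr_eq_iff)
    moreover have "\<sigma> x \<ominus> \<sigma> y = \<sigma> (x \<ominus> y)" using xy addmap_minus[OF sig_addmap] by simp
    ultimately have m: "\<sigma> (x \<ominus> y) \<in> I" by simp
    have "x \<ominus> y \<in> I" using sig_inv_I[OF minus_closed[OF xy(1) xy(3)] m] .
    then show "C = D" using xy by (simp add: pr_eq_iff)
  qed
  show "sq ` carrier Q = carrier Q"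
  proof
    show "sq ` carrier Q \<subseteq> carrier Q" by (auto intro: ring_hom_closed[OF sq_hom])
    show "carrier Q \<subseteq> sq ` carrier Q"
    proof
      fix C assume "C \<in> carrier Q"
      then obtain y where y: "y \<in> carrier R" "C = pr y" using Q_carrier by blast
      have "y \<in> \<sigma> ` carrier R" using sig_bij y(1) unfolding bij_betw_def by simp
      then obtain x where x: "x \<in> carrier R" "\<sigma> x = y" by (auto elim!: imageE)
      have "sq (pr x) = C" using x y by (simp add: qm_sig)
      moreover have "pr x \<in> carrier Q" using x by (simp add: pr_carrier)
      ultimately show "C \<in> sq ` carrier Q" by blast
    qed
  qed
qed

lemma Q_skew: "skew_derivation Q sq dq"
  unfolding skew_derivation_def
proof (intro conjI ballI)
  show "sq \<in> ring_iso Q Q" unfolding ring_iso_def using sq_hom sq_bij by blast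
  show "dq \<in> carrier Q \<rightarrow> carrier Q"
  proof
    fix C assume "C \<in> carrier Q"
    then obtain x where "x \<in> carrier R" "C = pr x" using Q_carrier by blast
    then show "dq C \<in> carrier Q" by (simp add: qm_del pr_carrier)
  qed
  fix C D assume "C \<in> carrier Q" "D \<in> carrier Q"
  then obtain x y where xy: "x \<in> carrier R" "C = pr x" "y \<in> carrier R" "D = pr y" using Q_carrier by metis
  show "dq (C \<oplus>\<^bsub>Q\<^esub> D) = dq C \<oplus>\<^bsub>Q\<^esub> dq D" using xy by (simp add: Q_add_pr qm_del del_add)
  show "dq (C \<otimes>\<^bsub>Q\<^esub> D) = dq C \<otimes>\<^bsub>Q\<^esub> D \<oplus>\<^bsub>Q\<^esub> sq C \<otimes>\<^bsub>Q\<^esub> dq D"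
    using xy by (simp add: Q_add_pr Q_mult_pr qm_del qm_sig del_mult)
qed

lemma qf_fdeg:
  assumes d: "addmap d" "d ` I \<subseteq> I" "\<And>z B. z \<in> carrier R \<Longrightarrow> ereal B \<le> w z \<Longrightarrow> ereal (B + 1) \<le> w (d z)"
    and dq: "\<And>x. x \<in> carrier R \<Longrightarrow> D (pr x) = pr (d x)"
  shows "fdeg Q (quot_filt w) D > 0"
proof -
  have "1 \<le> quot_filt w (D C) - quot_filt w C" if C: "C \<in> carrier Q - {\<zero>\<^bsub>Q\<^esub>}" for C
  proof -
    obtain x where x: "x \<in> carrier R" "C = pr x" using C Q_carrier by blast
    have "x \<notin> I" using C x pr_I Q_zero by auto
    then have ni: "qf x \<noteq> \<infinity>" using qf_inf x by blast
    have nm: "qf x \<noteq> -\<infinity>" using qf_notminf x by blast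
    have st: "qf x + 1 \<le> qf (d x)" by (rule qf_step[OF d x(1)])
    obtain c where c: "qf x = ereal c" using ni nm by (cases "qf x") auto
    show ?thesis using st c x dq[OF x(1)]
      by (cases "qf (d x)") (auto simp: ereal_le_minus_iff)
  qed
  then have "1 \<le> fdeg Q (quot_filt w) D" unfolding fdeg_def by (rule INF_greatest)
  moreover have "(0::ereal) < 1" by simp
  ultimately show ?thesis by (metis less_le_trans)
qed

lemma Q_compat: "compatible Q (quot_filt w) sq dq"
  unfolding compatible_def
proof
  show "fdeg Q (quot_filt w) (\<lambda>C. sq C \<ominus>\<^bsub>Q\<^esub> C) > 0"
  proof (rule qf_fdeg[where d = "\<lambda>x. \<sigma> x \<ominus> x"])
    show "addmap (\<lambda>x. \<sigma> x \<ominus> x)" by (rule sig_minus_addmap)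
    show "(\<lambda>x. \<sigma> x \<ominus> x) ` I \<subseteq> I" using I_sig I_carrier by (auto intro!: I_minus)
    show "\<And>z B. z \<in> carrier R \<Longrightarrow> ereal B \<le> w z \<Longrightarrow> ereal (B + 1) \<le> w (\<sigma> z \<ominus> z)" by (rule sig_bound)
    show "\<And>x. x \<in> carrier R \<Longrightarrow> sq (pr x) \<ominus>\<^bsub>Q\<^esub> pr x = pr (\<sigma> x \<ominus> x)" by (simp add: qm_sig pr_minus)
  qed
  show "fdeg Q (quot_filt w) dq > 0"
  proof (rule qf_fdeg[where d = \<delta>])
    show "addmap \<delta>" by (rule del_addmap)
    show "\<delta> ` I \<subseteq> I" by (rule delI)
    show "\<And>z B. z \<in> carrier R \<Longrightarrow> ereal B \<le> w z \<Longrightarrow> ereal (B + 1) \<le> w (\<delta> z)" by (rule del_bound)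
    show "\<And>x. x \<in> carrier R \<Longrightarrow> dq (pr x) = pr (\<delta> x)" by (rule qm_del)
  qed
qed

end

context skI begin

abbreviation K where "K \<equiv> ps_closure R w (ideal_times_S R w \<sigma> \<delta> I)"

lemma finsum_in_I: "finite A \<Longrightarrow> (\<And>k. k \<in> A \<Longrightarrow> f k \<in> I) \<Longrightarrow> finsum R f A \<in> I"
proof (induction A rule: finite_induct)
  case empty then show ?case by (simp add: I_zero)
next
  case (insert x F)
  have "f \<in> F \<rightarrow> carrier R" "f x \<in> carrier R" using insert I_carrier by auto
  then show ?case using insert by (simp add: finsum_insert I_add)
qed

lemma S_finsum:
  assumes "finite A" "f \<in> A \<rightarrow> carrier S"
  shows "finsum S f A = (\<lambda>n. finsum R (\<lambda>k. f k n) A)"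
  using assms
proof (induction A rule: finite_induct)
  case empty
  interpret Sr: ring S by (rule S_ring)
  show ?case by (simp add: S_zero)
next
  case (insert x F)
  interpret Sr: ring S by (rule S_ring)
  have "finsum S f (insert x F) = f x \<oplus>\<^bsub>S\<^esub> finsum S f F" using insert by (simp add: Sr.finsum_insert)
  also have "\<dots> = (\<lambda>n. f x n \<oplus> finsum R (\<lambda>k. f k n) F)" using insert by (simp add: S_add)
  also have "\<dots> = (\<lambda>n. finsum R (\<lambda>k. f k n) (insert x F))"
  proof
    fix n
    have "(\<lambda>k. f k n) \<in> F \<rightarrow> carrier R" "f x n \<in> carrier R" using insert.prems by (auto intro!: S_val)
    then show "f x n \<oplus> finsum R (\<lambda>k. f k n) F = finsum R (\<lambda>k. f k n) (insert x F)"
      using insert by (simp add: finsum_insert)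
  qed
  finally show ?case .
qed

lemma IS_coef: "t \<in> ideal_times_S R w \<sigma> \<delta> I \<Longrightarrow> t n \<in> I"
proof -
  assume "t \<in> ideal_times_S R w \<sigma> \<delta> I"
  then have "\<exists>(m::nat) a s. t = finsum S (\<lambda>k. const_ps R (a k) \<otimes>\<^bsub>S\<^esub> s k) {..<m} \<and> (\<forall>k<m. a k \<in> I \<and> s k \<in> bseries R w)"
    unfolding ideal_times_S_def by simp
  then obtain m :: nat and a s where t: "t = finsum S (\<lambda>k. const_ps R (a k) \<otimes>\<^bsub>S\<^esub> s k) {..<m}"
    and as: "\<forall>k<m. a k \<in> I \<and> s k \<in> bseries R w" by blast
  have sS: "k < m \<Longrightarrow> s k \<in> carrier S" for k using as S_carrier by auto
  have e: "k < m \<Longrightarrow> const_ps R (a k) \<otimes>\<^bsub>S\<^esub> s k = (\<lambda>n. a k \<otimes> s k n)" for k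
    unfolding S_mult using as sS I_carrier by (intro pm_const) auto
  have "(\<lambda>k. const_ps R (a k) \<otimes>\<^bsub>S\<^esub> s k) \<in> {..<m} \<rightarrow> carrier S"
    using e sS as I_carrier by (auto intro!: lmult_S)
  then have "t n = finsum R (\<lambda>k. (const_ps R (a k) \<otimes>\<^bsub>S\<^esub> s k) n) {..<m}" unfolding t by (simp add: S_finsum)
  also have "\<dots> \<in> I" using e as sS I_lmult[OF _ ] by (intro finsum_in_I) (auto intro!: I_rmult)
  finally show ?thesis .
qed

lemma K_eq: "K = {s \<in> carrier S. \<forall>n. s n \<in> I}"
proof
  show "K \<subseteq> {s \<in> carrier S. \<forall>n. s n \<in> I}"
  proof
    fix s assume s: "s \<in> K"
    then have sS: "s \<in> carrier S" unfolding ps_closure_def S_carrier by blast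
    have "\<forall>k::nat. \<exists>t \<in> ideal_times_S R w \<sigma> \<delta> I. ereal (real k) \<le> ps_filt w (\<lambda>n. s n \<ominus> t n)"
      using s unfolding ps_closure_def by blast
    then obtain t where t: "\<And>k. t k \<in> ideal_times_S R w \<sigma> \<delta> I" "\<And>k. ereal (real k) \<le> ps_filt w (\<lambda>n. s n \<ominus> t k n)"
      by metis
    have "s n \<in> I" for n
    proof -
      have ti: "\<And>k. t k n \<in> I" using t(1) IS_coef by blast
      have f1: "fconv R w (\<lambda>k. t k n) (s n)" unfolding fconv_def
      proof (intro conjI allI)
        show "s n \<in> carrier R" using sS by simp
        fix N :: real
        obtain M :: nat where M: "N + real n / 2 \<le> real M" using real_arch_simple by blast
        have "ereal N \<le> w (t k n \<ominus> s n)" if "k \<ge> M" for k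
        proof -
          have "ereal (real k - real n / 2) \<le> w (s n \<ominus> t k n)" using t(2)[of k] unfolding ps_filt_ge_iff by blast
          moreover have "w (s n \<ominus> t k n) = w (t k n \<ominus> s n)" using sS ti[of k] I_carrier by (simp add: w_minus_sym)
          moreover have "ereal N \<le> ereal (real k - real n / 2)" using M that by simp
          ultimately show ?thesis by (metis order.trans)
        qed
        then show "\<exists>M. \<forall>k\<ge>M. ereal N \<le> w (t k n \<ominus> s n)" by blast
      qed
      have "\<forall>a L. (\<forall>n. a n \<in> I) \<longrightarrow> fconv R w a L \<longrightarrow> L \<in> I" using Icl unfolding fclosed_def .
      from this[rule_format, OF _ f1] ti show ?thesis by blast
    qed
    then show "s \<in> {s \<in> carrier S. \<forall>n. s n \<in> I}" using sS by blast
  qed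
  show "{s \<in> carrier S. \<forall>n. s n \<in> I} \<subseteq> K"
  proof
    fix s assume s: "s \<in> {s \<in> carrier S. \<forall>n. s n \<in> I}"
    then have sS: "s \<in> carrier S" and sI: "\<And>n. s n \<in> I" by auto
    have "\<exists>t\<in>ideal_times_S R w \<sigma> \<delta> I. ereal N \<le> ps_filt w (\<lambda>n. s n \<ominus> t n)" for N
    proof -
      obtain M where M: "\<forall>n\<ge>M. ereal (N - real n / 2) \<le> w (s n)" using sS unfolding S_mem growth_def by blast
      define t where "t = finsum S (\<lambda>k. const_ps R (s k) \<otimes>\<^bsub>S\<^esub> mono k) {..<M}"
      have tI: "t \<in> ideal_times_S R w \<sigma> \<delta> I" unfolding ideal_times_S_def t_def
        using sI mono_S S_carrier by blast
      have e: "k < M \<Longrightarrow> const_ps R (s k) \<otimes>\<^bsub>S\<^esub> mono k = (\<lambda>n. s k \<otimes> mono k n)" for k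
        unfolding S_mult using sS mono_S by (intro pm_const) auto
      have "(\<lambda>k. const_ps R (s k) \<otimes>\<^bsub>S\<^esub> mono k) \<in> {..<M} \<rightarrow> carrier S"
        using e sS mono_S by (auto intro!: lmult_S)
      then have tn: "t n = finsum R (\<lambda>k. (const_ps R (s k) \<otimes>\<^bsub>S\<^esub> mono k) n) {..<M}" for n
        unfolding t_def by (simp add: S_finsum)
      have tv: "t n = (if n < M then s n else \<zero>)" for n
      proof -
        have ek: "k < M \<Longrightarrow> (const_ps R (s k) \<otimes>\<^bsub>S\<^esub> mono k) n = (if k = n then s n else \<zero>)" for k
          using e[of k] S_val[OF sS, of k] by (auto simp: mono_def)
        have "t n = finsum R (\<lambda>k. if k = n then s n else \<zero>) {..<M}" unfolding tn
          using S_val[OF sS] by (intro finsum_cong) (auto simp: ek)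
        moreover have "\<not> n < M \<Longrightarrow> finsum R (\<lambda>k. if k = n then s n else \<zero>) {..<M} = \<zero>"
          by (intro add.finprod_one_eqI) auto
        ultimately show ?thesis using sS by (simp add: finsum_single_at)
      qed
      have "ereal N \<le> ps_filt w (\<lambda>n. s n \<ominus> t n)" unfolding ps_filt_ge_iff
      proof
        fix n
        show "ereal (N - real n / 2) \<le> w (s n \<ominus> t n)"
        proof (cases "n < M")
          case True then show ?thesis using sS by (simp add: tv r_neg a_minus_def)
        next
          case False then show ?thesis using sS M by (simp add: tv a_minus_def)
        qed
      qed
      then show ?thesis using tI by blast
    qed
    then show "s \<in> K" unfolding ps_closure_def using sS S_carrier by blast
  qed
qed

lemma K_ideal: "ideal K S"
proof -
  interpret Sr: ring S by (rule S_ring)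
  have neg: "\<ominus>\<^bsub>S\<^esub> u = (\<lambda>n. \<ominus> u n)" if "u \<in> carrier S" for u
  proof (rule Sr.minus_equality)
    show "(\<lambda>n. \<ominus> u n) \<oplus>\<^bsub>S\<^esub> u = \<zero>\<^bsub>S\<^esub>" using that by (auto simp: S_add S_zero l_neg)
    show "u \<in> carrier S" by fact
    show "(\<lambda>n. \<ominus> u n) \<in> carrier S" using that unfolding S_mem by (auto intro!: growth_neg)
  qed
  show ?thesis
  proof (rule idealI[OF S_ring])
    show "subgroup K (add_monoid S)"
    proof (rule Sr.add.subgroupI)
      show "K \<subseteq> carrier S" unfolding K_eq by auto
      show "K \<noteq> {}" unfolding K_eq using S_zero_closed I_zero by blast
      show "\<And>a. a \<in> K \<Longrightarrow> \<ominus>\<^bsub>S\<^esub> a \<in> K"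
        unfolding K_eq using neg I_neg
        by (auto simp: S_mem growth_neg)
      show "\<And>a b. a \<in> K \<Longrightarrow> b \<in> K \<Longrightarrow> a \<oplus>\<^bsub>S\<^esub> b \<in> K"
        unfolding K_eq using I_add by (auto simp: S_add S_add_closed)
    qed
    fix a x assume a: "a \<in> K" and x: "x \<in> carrier S"
    have aS: "a \<in> carrier S" and aI: "\<And>n. a n \<in> I" using a unfolding K_eq by auto
    have cfI: "y \<in> I \<Longrightarrow> cf i k y \<in> I" for i k y
      by (induction i arbitrary: k) (auto intro!: I_add I_sig I_del I_zero)
    show "x \<otimes>\<^bsub>S\<^esub> a \<in> K" unfolding K_eq
    proof (intro CollectI conjI allI)
      show "x \<otimes>\<^bsub>S\<^esub> a \<in> carrier S" using x aS by (rule Sr.m_closed)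
      fix n
      show "(x \<otimes>\<^bsub>S\<^esub> a) n \<in> I" unfolding S_mult pm_def
        using x aS aI cfI by (auto intro!: finsum_in_I fsum_in_set[OF Isub Icl] pt_tends_S I_lmult simp: pt_def)
    qed
    show "a \<otimes>\<^bsub>S\<^esub> x \<in> K" unfolding K_eq
    proof (intro CollectI conjI allI)
      show "a \<otimes>\<^bsub>S\<^esub> x \<in> carrier S" using aS x by (rule Sr.m_closed)
      fix n
      show "(a \<otimes>\<^bsub>S\<^esub> x) n \<in> I" unfolding S_mult pm_def
        using x aS aI by (auto intro!: finsum_in_I fsum_in_set[OF Isub Icl] pt_tends_S I_rmult simp: pt_def)
    qed
  qed
qed

end

context skI begin

abbreviation wq where "wq \<equiv> quot_filt w"
abbreviation T where "T \<equiv> skew_ps Q wq sq dq"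

lemma ereal_le_by_reals: "(\<And>B. ereal B < (a::ereal) \<Longrightarrow> ereal B \<le> b) \<Longrightarrow> a \<le> b"
  by (metis ereal_dense2 not_le order.strict_trans1 less_irrefl)

lemma qf_add: "x \<in> carrier R \<Longrightarrow> y \<in> carrier R \<Longrightarrow> min (qf x) (qf y) \<le> qf (x \<oplus> y)"
proof (rule ereal_le_by_reals)
  fix B assume xy: "x \<in> carrier R" "y \<in> carrier R" and B: "ereal B < min (qf x) (qf y)"
  obtain z1 where z1: "z1 \<in> pr x" "ereal B < w z1" using B qf_gt by auto
  obtain z2 where z2: "z2 \<in> pr y" "ereal B < w z2" using B qf_gt by auto
  obtain i1 where i1: "i1 \<in> I" "z1 = i1 \<oplus> x" using z1 coset_mem xy by blast
  obtain i2 where i2: "i2 \<in> I" "z2 = i2 \<oplus> y" using z2 coset_mem xy by blast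
  have c: "i1 \<in> carrier R" "i2 \<in> carrier R" using i1 i2 I_carrier by auto
  have "z1 \<oplus> z2 = (i1 \<oplus> i2) \<oplus> (x \<oplus> y)" using i1 i2 c xy by algebra
  then have "z1 \<oplus> z2 \<in> pr (x \<oplus> y)" using coset_mem[of "x \<oplus> y"] xy i1 i2 I_add by auto
  then have "w (z1 \<oplus> z2) \<le> qf (x \<oplus> y)" by (rule qf_mem)
  moreover have "ereal B \<le> w (z1 \<oplus> z2)" using z1 z2 c xy i1 i2 by (intro w_add_ge) auto
  ultimately show "ereal B \<le> qf (x \<oplus> y)" by simp
qed

lemma qf_neg_le: "x \<in> carrier R \<Longrightarrow> qf x \<le> qf (\<ominus> x)"
  unfolding quot_filt_def
proof (rule Sup_least)
  fix b assume x: "x \<in> carrier R" and "b \<in> w ` pr x"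
  then obtain z where z: "z \<in> pr x" "b = w z" by blast
  obtain i where i: "i \<in> I" "z = i \<oplus> x" using z coset_mem x by blast
  have "\<ominus> z = (\<ominus> i) \<oplus> (\<ominus> x)" using i x I_carrier by (simp add: minus_add)
  then have "\<ominus> z \<in> pr (\<ominus> x)" using coset_mem[of "\<ominus> x"] x i I_neg by auto
  then have "w (\<ominus> z) \<le> Sup (w ` pr (\<ominus> x))" by (intro Sup_upper imageI)
  moreover have "w (\<ominus> z) = b" using z i x I_carrier by simp
  ultimately show "b \<le> Sup (w ` pr (\<ominus> x))" by simp
qed

lemma qf_neg: "x \<in> carrier R \<Longrightarrow> qf (\<ominus> x) = qf x"
  using qf_neg_le[of x] qf_neg_le[of "\<ominus> x"] by simp

lemma qf_minus: "x \<in> carrier R \<Longrightarrow> y \<in> carrier R \<Longrightarrow> min (qf x) (qf y) \<le> qf (x \<ominus> y)"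
  unfolding a_minus_def using qf_add[of x "\<ominus> y"] qf_neg[of y] by simp

lemma Q_fconv_unique:
  assumes "fconv Q wq s L1" "fconv Q wq s L2" "\<And>n. s n \<in> carrier Q"
  shows "L1 = L2"
proof -
  interpret Qr: ring Q by (rule Q_ring)
  have "L1 \<in> carrier Q" "L2 \<in> carrier Q" using assms(1,2) unfolding fconv_def by simp_all
  then obtain l1 l2 where l1: "l1 \<in> carrier R" "L1 = pr l1" and l2: "l2 \<in> carrier R" "L2 = pr l2"
    by (metis Q_cases)
  have "ereal N \<le> qf (l1 \<ominus> l2)" for N
  proof -
    obtain M1 where M1: "\<forall>n\<ge>M1. ereal N \<le> wq (s n \<ominus>\<^bsub>Q\<^esub> L1)" using assms(1) unfolding fconv_def by blast
    obtain M2 where M2: "\<forall>n\<ge>M2. ereal N \<le> wq (s n \<ominus>\<^bsub>Q\<^esub> L2)" using assms(2) unfolding fconv_def by blast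
    let ?n = "max M1 M2"
    obtain x where x: "x \<in> carrier R" "s ?n = pr x" using assms(3)[of ?n] by (rule Q_cases)
    have "l1 \<ominus> l2 = (x \<ominus> l2) \<ominus> (x \<ominus> l1)" using x l1 l2 by algebra
    moreover have "ereal N \<le> qf (x \<ominus> l2)" "ereal N \<le> qf (x \<ominus> l1)"
    proof -
      have "ereal N \<le> wq (s ?n \<ominus>\<^bsub>Q\<^esub> L1)" "ereal N \<le> wq (s ?n \<ominus>\<^bsub>Q\<^esub> L2)" using M1 M2 by auto
      then show "ereal N \<le> qf (x \<ominus> l2)" "ereal N \<le> qf (x \<ominus> l1)"
        unfolding x(2) l1(2) l2(2) using x l1 l2 by (simp_all add: pr_minus)
    qed
    ultimately show ?thesis
    proof -
      assume e: "l1 \<ominus> l2 = (x \<ominus> l2) \<ominus> (x \<ominus> l1)" and b: "ereal N \<le> qf (x \<ominus> l2)" "ereal N \<le> qf (x \<ominus> l1)"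
      have "min (qf (x \<ominus> l2)) (qf (x \<ominus> l1)) \<le> qf ((x \<ominus> l2) \<ominus> (x \<ominus> l1))"
        using x l1 l2 by (intro qf_minus) auto
      moreover have "ereal N \<le> min (qf (x \<ominus> l2)) (qf (x \<ominus> l1))" using b by simp
      ultimately show ?thesis unfolding e by (rule order.trans[rotated])
    qed
  qed
  then have "qf (l1 \<ominus> l2) = \<infinity>" by (rule ereal_top_le)
  then have "l1 \<ominus> l2 \<in> I" using qf_inf l1 l2 by blast
  then show ?thesis using l1 l2 pr_eq_iff by simp
qed

lemma pr_finsum: "finite A \<Longrightarrow> f \<in> A \<rightarrow> carrier R \<Longrightarrow> pr (finsum R f A) = finsum Q (\<lambda>i. pr (f i)) A"
proof (induction A rule: finite_induct)
  case empty
  interpret Qr: ring Q by (rule Q_ring)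
  show ?case using pr_zero by simp
next
  case (insert x F)
  interpret Qr: ring Q by (rule Q_ring)
  have "(\<lambda>i. pr (f i)) \<in> F \<rightarrow> carrier Q" "pr (f x) \<in> carrier Q" using insert.prems by (auto intro!: pr_carrier)
  then show ?case using insert by (simp add: finsum_insert Qr.finsum_insert pr_add finsum_closed)
qed

lemma pr_fsum:
  assumes "\<And>i. b i \<in> carrier R" "tends b"
  shows "fsum Q wq (\<lambda>i. pr (b i)) = pr (fsum R w b)"
proof -
  interpret Qr: ring Q by (rule Q_ring)
  have c: "fconv R w (psum b) (fsum R w b)" "fsum R w b \<in> carrier R" using fsum_conv assms by auto
  have ps: "finsum Q (\<lambda>i. pr (b i)) {..<m} = pr (psum b m)" for m
    unfolding psum_def using assms by (simp add: pr_finsum)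
  have fc: "fconv Q wq (\<lambda>m. finsum Q (\<lambda>i. pr (b i)) {..<m}) (pr (fsum R w b))"
    unfolding fconv_def
  proof (intro conjI allI)
    show "pr (fsum R w b) \<in> carrier Q" using c by (simp add: pr_carrier)
    fix N :: real
    obtain M where M: "\<forall>n\<ge>M. ereal N \<le> w (psum b n \<ominus> fsum R w b)" using c unfolding fconv_def by blast
    have "ereal N \<le> wq (finsum Q (\<lambda>i. pr (b i)) {..<n} \<ominus>\<^bsub>Q\<^esub> pr (fsum R w b))" if "n \<ge> M" for n
    proof -
      have "wq (finsum Q (\<lambda>i. pr (b i)) {..<n} \<ominus>\<^bsub>Q\<^esub> pr (fsum R w b)) = qf (psum b n \<ominus> fsum R w b)"
        using c assms by (simp add: ps pr_minus)
      moreover have "w (psum b n \<ominus> fsum R w b) \<le> qf (psum b n \<ominus> fsum R w b)" using c assms by (intro qf_ge) auto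
      ultimately show ?thesis using M that by (metis order.trans)
    qed
    then show "\<exists>M. \<forall>n\<ge>M. ereal N \<le> wq (finsum Q (\<lambda>i. pr (b i)) {..<n} \<ominus>\<^bsub>Q\<^esub> pr (fsum R w b))" by blast
  qed
  have "(THE L. fconv Q wq (\<lambda>m. finsum Q (\<lambda>i. pr (b i)) {..<m}) L) = pr (fsum R w b)"
  proof (rule the_equality)
    show "fconv Q wq (\<lambda>m. finsum Q (\<lambda>i. pr (b i)) {..<m}) (pr (fsum R w b))" by (rule fc)
    fix L assume "fconv Q wq (\<lambda>m. finsum Q (\<lambda>i. pr (b i)) {..<m}) L"
    then show "L = pr (fsum R w b)" using fc assms
      by (intro Q_fconv_unique[of "\<lambda>m. finsum Q (\<lambda>i. pr (b i)) {..<m}"]) (auto intro!: Qr.finsum_closed pr_carrier)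
  qed
  then show ?thesis unfolding fsum_def .
qed

lemma cfQ: "a \<in> carrier R \<Longrightarrow> skw_coef Q sq dq i k (pr a) = pr (cf i k a)"
proof (induction i arbitrary: k)
  case 0 then show ?case using pr_zero Q_zero by simp
next
  case (Suc i)
  then show ?case using pr_zero Q_zero by (simp add: qm_sig qm_del pr_add)
qed

end

lemma ring_transfer:
  fixes S :: "('a,'c) ring_scheme" and T :: "('b,'d) ring_scheme" and h :: "'a \<Rightarrow> 'b"
  assumes S: "ring S" and surj: "h ` carrier S = carrier T"
    and hadd: "\<And>x y. x \<in> carrier S \<Longrightarrow> y \<in> carrier S \<Longrightarrow> h (x \<oplus>\<^bsub>S\<^esub> y) = h x \<oplus>\<^bsub>T\<^esub> h y"
    and hmult: "\<And>x y. x \<in> carrier S \<Longrightarrow> y \<in> carrier S \<Longrightarrow> h (x \<otimes>\<^bsub>S\<^esub> y) = h x \<otimes>\<^bsub>T\<^esub> h y"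
    and hone: "h \<one>\<^bsub>S\<^esub> = \<one>\<^bsub>T\<^esub>" and hzero: "h \<zero>\<^bsub>S\<^esub> = \<zero>\<^bsub>T\<^esub>"
  shows "ring T"
proof -
  interpret S: ring S by fact
  have pre: "x \<in> carrier T \<Longrightarrow> \<exists>x'\<in>carrier S. x = h x'" for x using surj by auto
  have hc: "x \<in> carrier S \<Longrightarrow> h x \<in> carrier T" for x using surj by auto
  show ?thesis
  proof (rule ringI)
    show "abelian_group T"
    proof (rule abelian_groupI)
      fix x y assume "x \<in> carrier T" "y \<in> carrier T"
      then obtain x' y' where "x' \<in> carrier S" "x = h x'" "y' \<in> carrier S" "y = h y'" using pre by metis
      then show "x \<oplus>\<^bsub>T\<^esub> y \<in> carrier T" "x \<oplus>\<^bsub>T\<^esub> y = y \<oplus>\<^bsub>T\<^esub> x"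
        using hadd[symmetric] hc S.a_comm by (auto intro!: hc)
    next
      show "\<zero>\<^bsub>T\<^esub> \<in> carrier T" using hzero hc by force
    next
      fix x y z assume "x \<in> carrier T" "y \<in> carrier T" "z \<in> carrier T"
      then obtain x' y' z' where "x' \<in> carrier S" "x = h x'" "y' \<in> carrier S" "y = h y'" "z' \<in> carrier S" "z = h z'" using pre by metis
      then show "x \<oplus>\<^bsub>T\<^esub> y \<oplus>\<^bsub>T\<^esub> z = x \<oplus>\<^bsub>T\<^esub> (y \<oplus>\<^bsub>T\<^esub> z)"
        by (simp add: hadd[symmetric] S.a_assoc)
    next
      fix x assume "x \<in> carrier T"
      then obtain x' where x': "x' \<in> carrier S" "x = h x'" using pre by metis
      then show "\<zero>\<^bsub>T\<^esub> \<oplus>\<^bsub>T\<^esub> x = x" by (simp add: hzero[symmetric] hadd[symmetric])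
      have "h (\<ominus>\<^bsub>S\<^esub> x') \<oplus>\<^bsub>T\<^esub> x = \<zero>\<^bsub>T\<^esub>" using x' by (simp add: hadd[symmetric] S.l_neg hzero)
      then show "\<exists>y\<in>carrier T. y \<oplus>\<^bsub>T\<^esub> x = \<zero>\<^bsub>T\<^esub>" using x' hc by blast
    qed
    show "monoid T"
    proof (rule monoidI)
      fix x y assume "x \<in> carrier T" "y \<in> carrier T"
      then obtain x' y' where "x' \<in> carrier S" "x = h x'" "y' \<in> carrier S" "y = h y'" using pre by metis
      then show "x \<otimes>\<^bsub>T\<^esub> y \<in> carrier T" by (simp add: hmult[symmetric] hc)
    next
      show "\<one>\<^bsub>T\<^esub> \<in> carrier T" using hone hc by force
    next
      fix x y z assume "x \<in> carrier T" "y \<in> carrier T" "z \<in> carrier T"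
      then obtain x' y' z' where "x' \<in> carrier S" "x = h x'" "y' \<in> carrier S" "y = h y'" "z' \<in> carrier S" "z = h z'" using pre by metis
      then show "x \<otimes>\<^bsub>T\<^esub> y \<otimes>\<^bsub>T\<^esub> z = x \<otimes>\<^bsub>T\<^esub> (y \<otimes>\<^bsub>T\<^esub> z)"
        by (simp add: hmult[symmetric] S.m_assoc)
    next
      fix x assume "x \<in> carrier T"
      then obtain x' where x': "x' \<in> carrier S" "x = h x'" using pre by metis
      then show "\<one>\<^bsub>T\<^esub> \<otimes>\<^bsub>T\<^esub> x = x" "x \<otimes>\<^bsub>T\<^esub> \<one>\<^bsub>T\<^esub> = x" by (simp_all add: hone[symmetric] hmult[symmetric])
    qed
  next
    fix x y z assume "x \<in> carrier T" "y \<in> carrier T" "z \<in> carrier T"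
    then obtain x' y' z' where "x' \<in> carrier S" "x = h x'" "y' \<in> carrier S" "y = h y'" "z' \<in> carrier S" "z = h z'" using pre by metis
    then show "(x \<oplus>\<^bsub>T\<^esub> y) \<otimes>\<^bsub>T\<^esub> z = x \<otimes>\<^bsub>T\<^esub> z \<oplus>\<^bsub>T\<^esub> y \<otimes>\<^bsub>T\<^esub> z"
      "z \<otimes>\<^bsub>T\<^esub> (x \<oplus>\<^bsub>T\<^esub> y) = z \<otimes>\<^bsub>T\<^esub> x \<oplus>\<^bsub>T\<^esub> z \<otimes>\<^bsub>T\<^esub> y"
      by (simp_all add: hmult[symmetric] hadd[symmetric] S.l_distr S.r_distr)
  qed
qed

context skI begin

definition phi :: "(nat \<Rightarrow> 'a) \<Rightarrow> nat \<Rightarrow> 'a set" where "phi u = (\<lambda>n. pr (u n))"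

lemma T_carrier: "carrier T = bseries Q wq" unfolding skew_ps_def by simp
lemma T_add: "U \<oplus>\<^bsub>T\<^esub> V = (\<lambda>n. U n \<oplus>\<^bsub>Q\<^esub> V n)" unfolding skew_ps_def by simp
lemma T_zero: "\<zero>\<^bsub>T\<^esub> = (\<lambda>n. \<zero>\<^bsub>Q\<^esub>)" unfolding skew_ps_def by simp
lemma T_one: "\<one>\<^bsub>T\<^esub> = (\<lambda>n. if n = 0 then \<one>\<^bsub>Q\<^esub> else \<zero>\<^bsub>Q\<^esub>)" unfolding skew_ps_def by simp
lemma T_mult: "U \<otimes>\<^bsub>T\<^esub> V = (\<lambda>n. finsum Q (\<lambda>j. fsum Q wq (\<lambda>i. U i \<otimes>\<^bsub>Q\<^esub> skw_coef Q sq dq i (n - j) (V j))) {..n})"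
  unfolding skew_ps_def by simp

lemma phi_carrier: "u \<in> carrier S \<Longrightarrow> phi u \<in> carrier T"
proof -
  assume u: "u \<in> carrier S"
  have "\<forall>N::real. \<exists>M. \<forall>n\<ge>M. ereal (N - real n / 2) \<le> wq (phi u n)"
  proof
    fix N :: real
    obtain M where "\<forall>n\<ge>M. ereal (N - real n / 2) \<le> w (u n)" using u unfolding S_mem growth_def by blast
    then show "\<exists>M. \<forall>n\<ge>M. ereal (N - real n / 2) \<le> wq (phi u n)"
      unfolding phi_def using u qf_ge by (meson S_val order.trans)
  qed
  then show ?thesis unfolding T_carrier bseries_def bseries_growth_iff phi_def using u
    by (auto intro!: pr_carrier)
qed

lemma phi_add: "u \<in> carrier S \<Longrightarrow> v \<in> carrier S \<Longrightarrow> phi (u \<oplus>\<^bsub>S\<^esub> v) = phi u \<oplus>\<^bsub>T\<^esub> phi v"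
  unfolding phi_def S_add T_add by (simp add: pr_add)

lemma phi_one: "phi \<one>\<^bsub>S\<^esub> = \<one>\<^bsub>T\<^esub>"
  unfolding phi_def S_one T_one
proof
  fix n show "pr (if n = 0 then \<one> else \<zero>) = (if n = 0 then \<one>\<^bsub>Q\<^esub> else \<zero>\<^bsub>Q\<^esub>)"
    by (cases "n = 0") (simp_all add: pr_one pr_zero)
qed

lemma phi_zero: "phi \<zero>\<^bsub>S\<^esub> = \<zero>\<^bsub>T\<^esub>"
  unfolding phi_def S_zero T_zero using pr_zero by auto

lemma phi_mult: "u \<in> carrier S \<Longrightarrow> v \<in> carrier S \<Longrightarrow> phi (u \<otimes>\<^bsub>S\<^esub> v) = phi u \<otimes>\<^bsub>T\<^esub> phi v"
proof -
  assume u: "u \<in> carrier S" and v: "v \<in> carrier S"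
  show ?thesis unfolding S_mult T_mult phi_def
  proof
    fix n
    have "pr (pm u v n) = finsum Q (\<lambda>j. pr (fsum R w (pt u v n j))) {..n}"
      unfolding pm_def using u v by (intro pr_finsum) (auto intro!: fsum_carrier pt_tends_S)
    also have "\<dots> = finsum Q (\<lambda>j. fsum Q wq (\<lambda>i. pr (u i) \<otimes>\<^bsub>Q\<^esub> skw_coef Q sq dq i (n - j) (pr (v j)))) {..n}"
    proof -
      interpret Qr: ring Q by (rule Q_ring)
      have eq: "pr (fsum R w (pt u v n j)) = fsum Q wq (\<lambda>i. pr (u i) \<otimes>\<^bsub>Q\<^esub> skw_coef Q sq dq i (n - j) (pr (v j)))"
        if "j \<le> n" for j
      proof -
        have "(\<lambda>i. pr (u i) \<otimes>\<^bsub>Q\<^esub> skw_coef Q sq dq i (n - j) (pr (v j))) = (\<lambda>i. pr (pt u v n j i))"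
          unfolding pt_def using u v by (auto simp: cfQ pr_mult)
        then show ?thesis using pr_fsum[of "pt u v n j"] u v that by (simp add: pt_tends_S)
      qed
      have c: "(\<lambda>j. fsum Q wq (\<lambda>i. pr (u i) \<otimes>\<^bsub>Q\<^esub> skw_coef Q sq dq i (n - j) (pr (v j)))) \<in> {..n} \<rightarrow> carrier Q"
        using eq[symmetric] u v by (auto intro!: pr_carrier fsum_carrier pt_tends_S)
      have cL: "(\<lambda>j. pr (fsum R w (pt u v n j))) \<in> {..n} \<rightarrow> carrier Q"
        using u v by (auto intro!: pr_carrier fsum_carrier pt_tends_S)
      show ?thesis using cL by (intro Qr.finsum_cong) (auto simp: eq)
    qed
    finally show "pr (pm u v n) = finsum Q (\<lambda>j. fsum Q wq (\<lambda>i. pr (u i) \<otimes>\<^bsub>Q\<^esub> skw_coef Q sq dq i (n - j) (pr (v j)))) {..n}" .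
  qed
qed

end

context skI begin

lemma phi_surj: "phi ` carrier S = carrier T"
proof
  show "phi ` carrier S \<subseteq> carrier T" using phi_carrier by blast
  show "carrier T \<subseteq> phi ` carrier S"
  proof
    fix U assume U: "U \<in> carrier T"
    have Uc: "\<And>n. U n \<in> carrier Q" and Ug: "\<forall>N::real. \<exists>M. \<forall>n\<ge>M. ereal (N - real n / 2) \<le> wq (U n)"
      using U unfolding T_carrier bseries_def bseries_growth_iff by auto
    have "\<forall>n. \<exists>x. x \<in> carrier R \<and> U n = pr x" using Uc Q_carrier by blast
    then obtain x where x: "\<And>n. x n \<in> carrier R" "\<And>n. U n = pr (x n)" by metis
    define b where "b n = (if wq (U n) = \<infinity> then real n else min (real n) (real_of_ereal (wq (U n)) - 1))" for n
    have "ereal (b n) < wq (U n)" for n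
    proof (cases "wq (U n) = \<infinity>")
      case True then show ?thesis unfolding b_def by simp
    next
      case False
      have "wq (U n) \<noteq> -\<infinity>" using qf_notminf[OF x(1)] x(2) by simp
      then obtain q where q: "wq (U n) = ereal q" using False by (cases "wq (U n)") auto
      then show ?thesis unfolding b_def by (simp add: min_less_iff_disj)
    qed
    then have "\<forall>n. \<exists>z\<in>U n. ereal (b n) < w z" using qf_gt x(2) by metis
    then obtain r where r: "\<And>n. r n \<in> U n" "\<And>n. ereal (b n) < w (r n)" by metis
    have rc: "r n \<in> carrier R" for n
    proof -
      obtain i where "i \<in> I" "r n = i \<oplus> x n" using r(1)[of n] x coset_mem by metis
      then show ?thesis using x(1)[of n] I_carrier by simp
    qed
    have pr_r: "pr (r n) = U n" for n
      using abelian_subgroup.a_repr_independence'[OF Iabs, of "r n" "x n"] r(1)[of n] x by simp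
    have "growth r" unfolding growth_def
    proof
      fix N :: real
      obtain M where M: "\<forall>n\<ge>M. ereal (N + 1 - real n / 2) \<le> wq (U n)" using Ug by blast
      obtain M' :: nat where M': "N \<le> real M'" using real_arch_simple by blast
      have "ereal (N - real n / 2) \<le> w (r n)" if n: "n \<ge> max M M'" for n
      proof -
        have nN: "N - real n / 2 \<le> real n" using M' n by (simp add: field_simps)
        have "N - real n / 2 \<le> b n"
        proof (cases "wq (U n) = \<infinity>")
          case True then show ?thesis unfolding b_def using nN by simp
        next
          case False
          have "wq (U n) \<noteq> -\<infinity>" using qf_notminf[OF x(1)] x(2) by simp
          then obtain q where q: "wq (U n) = ereal q" using False by (cases "wq (U n)") auto
          have "ereal (N + 1 - real n / 2) \<le> ereal q" using M[rule_format, of n] n q by simp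
          then show ?thesis unfolding b_def using q nN by simp
        qed
        then have "ereal (N - real n / 2) \<le> ereal (b n)" by simp
        then show ?thesis using r(2)[of n] by (meson less_imp_le order.trans)
      qed
      then show "\<exists>M. \<forall>n\<ge>M. ereal (N - real n / 2) \<le> w (r n)" by blast
    qed
    then have "r \<in> carrier S" unfolding S_mem using rc by blast
    moreover have "phi r = U" unfolding phi_def using pr_r by auto
    ultimately show "U \<in> phi ` carrier S" by blast
  qed
qed

lemma phi_kernel: "a_kernel S T phi = K"
  unfolding a_kernel_def' K_eq T_zero phi_def Q_zero
proof (intro Collect_cong conj_cong refl)
  fix u assume "u \<in> carrier S"
  then show "((\<lambda>n. pr (u n)) = (\<lambda>n. I)) = (\<forall>n. u n \<in> I)"
    using pr_eq_zero by (auto simp: fun_eq_iff)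
qed

lemma T_ring: "ring T"
proof (rule ring_transfer[where h = phi])
  show "ring S" by (rule S_ring)
  show "phi ` carrier S = carrier T" by (rule phi_surj)
  show "\<And>x y. x \<in> carrier S \<Longrightarrow> y \<in> carrier S \<Longrightarrow> phi (x \<oplus>\<^bsub>S\<^esub> y) = phi x \<oplus>\<^bsub>T\<^esub> phi y" by (rule phi_add)
  show "\<And>x y. x \<in> carrier S \<Longrightarrow> y \<in> carrier S \<Longrightarrow> phi (x \<otimes>\<^bsub>S\<^esub> y) = phi x \<otimes>\<^bsub>T\<^esub> phi y" by (rule phi_mult)
  show "phi \<one>\<^bsub>S\<^esub> = \<one>\<^bsub>T\<^esub>" by (rule phi_one)
  show "phi \<zero>\<^bsub>S\<^esub> = \<zero>\<^bsub>T\<^esub>" by (rule phi_zero)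
qed

lemma phi_hom: "phi \<in> ring_hom S T"
  by (rule ring_hom_memI) (auto simp: phi_carrier phi_mult phi_add phi_one)

lemma main_iso: "S Quot K \<simeq> T"
proof -
  have "ring_hom_ring S T phi" by (rule ring_hom_ringI2[OF S_ring T_ring phi_hom])
  from ring_hom_ring.FactRing_iso[OF this phi_surj] show ?thesis unfolding phi_kernel .
qed

end

theorem lemma2p1p2:
  fixes R :: "('a,'m) ring_scheme" and w :: "'a \<Rightarrow> ereal"
    and \<sigma> \<delta> :: "'a \<Rightarrow> 'a" and I :: "'a set"
  assumes "ring R"
    and "filtration R w" and "separated R w" and "fcomplete R w" and "zariskian R w"
    and "skew_derivation R \<sigma> \<delta>" and "compatible R w \<sigma> \<delta>"
    and "ideal I R" and "fclosed R w I"
    and "\<sigma> ` I \<subseteq> I" and "\<delta> ` I \<subseteq> I"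
  shows "skew_derivation (R Quot I) (quot_map R I \<sigma>) (quot_map R I \<delta>)
       \<and> compatible (R Quot I) (quot_filt w) (quot_map R I \<sigma>) (quot_map R I \<delta>)
       \<and> ideal (ps_closure R w (ideal_times_S R w \<sigma> \<delta> I)) (skew_ps R w \<sigma> \<delta>)
       \<and> (skew_ps R w \<sigma> \<delta>) Quot (ps_closure R w (ideal_times_S R w \<sigma> \<delta> I))
           \<simeq> skew_ps (R Quot I) (quot_filt w) (quot_map R I \<sigma>) (quot_map R I \<delta>)"
proof -
  interpret skI R w \<sigma> \<delta> I
  proof -
    interpret fring R w by (rule fring.intro[OF assms(1)]) (rule fring_axioms.intro[OF assms(2,3,4)])
    show "skI R w \<sigma> \<delta> I"
      by (intro skI.intro sk.intro skI_axioms.intro sk_axioms.intro) (fact | rule fring_axioms)+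
  qed
  show ?thesis using Q_skew Q_compat K_ideal main_iso by blast
qed

end
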